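(* Let $(M,\circ,\mathrm{OR})$ be a free $\mathbb{D}$-module of rank 3 with scalar product and orientation. (1) Two elements $z_1,z_2\in M\setminus\epsilon M$ are $\mathbb{R}$-linearly dependent if and only if they have the same axis (as unoriented lines) and the same pitch. (2) If $z_1,z_2,z_3\in M\setminus\epsilon M$ are $\mathbb{R}$-linearly dependent, then their axes intersect orthogonally a common line of $E$; moreover, if the axes are parallel, they are coplanar.
   Context: $\mathbb{D}=\{a+\epsilon b: a,b\in\mathbb{R}\}$, $\epsilon^2=0$. Scalar product: symmetric $\mathbb{D}$-bilinear $\circ:M\times M\to\mathbb{D}$ with $\mathfrak{Re}(x\circ x)\ge0$, equality iff $x\in\epsilon M$; orientation: one of the two classes of ordered bases under $\{b'_j=A_{jk}b_k\}\sim\{b_k\}$ iff $\det\mathfrak{Re}(A)>0$. $V=M/\epsilon M$, $\pi$ the quotient map. $E$ is the set of real 3-dimensional subspaces $P\subset M$ with $\mathfrak{Du}(x\circ y)=0$ for $x,y\in P$ and $P\cap\epsilon M=\{0\}$, a Euclidean affine space over $V$ (with $B-A:=d^ke_k$ where $e^B_i=e^A_i+\epsilon\,\epsilon_{ijk}d^ke^A_j$, $\{e_i\}$ positive orthonormal in $V$, $e^P_i\in P$ its lift). Each $z\in M\setminus\epsilon M$ is uniquely $z=(a+\epsilon b)u$ with $a>0$, $b\in\mathbb{R}$, $u\circ u=1$; its pitch is $b/a$ and its axis is the line $\{P\in E: u\in P\}$, with direction $\pi(u)$. *)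

theory Defs
  imports "HOL-Analysis.Analysis"
begin

datatype dual = Dual (re: real) (du: real)

instantiation dual :: comm_ring_1
begin
definition zero_dual_def: "0 = Dual 0 0"
definition one_dual_def: "1 = Dual 1 0"
definition plus_dual_def: "x + y = Dual (re x + re y) (du x + du y)"
definition minus_dual_def: "x - y = Dual (re x - re y) (du x - du y)"
definition uminus_dual_def: "- x = Dual (- re x) (- du x)"
definition times_dual_def: "x * y = Dual (re x * re y) (re x * du y + du x * re y)"
instance
  by standard (auto simp: zero_dual_def one_dual_def plus_dual_def minus_dual_def
      uminus_dual_def times_dual_def algebra_simps intro: dual.expand)
end

section \<open>D-modules: a real vector space with a square-zero linear map e (multiplication by epsilon)\<close>

definition dscale :: "('m::real_vector \<Rightarrow> 'm) \<Rightarrow> dual \<Rightarrow> 'm \<Rightarrow> 'm" where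
  "dscale e c x = re c *\<^sub>R x + du c *\<^sub>R e x"

definition dbasis :: "('m::real_vector \<Rightarrow> 'm) \<Rightarrow> 'm^3 \<Rightarrow> bool" where
  "dbasis e b \<longleftrightarrow> (\<forall>x. \<exists>!c::dual^3. x = (\<Sum>k\<in>UNIV. dscale e (c$k) (b$k)))"

definition same_or :: "('m::real_vector \<Rightarrow> 'm) \<Rightarrow> 'm^3 \<Rightarrow> 'm^3 \<Rightarrow> bool" where
  "same_or e b b' \<longleftrightarrow> (\<exists>A::dual^3^3.
      (\<forall>j. b'$j = (\<Sum>k\<in>UNIV. dscale e (A$j$k) (b$k))) \<and> det (\<chi> j k. re (A$j$k)) > 0)"

definition orientation :: "('m::real_vector \<Rightarrow> 'm) \<Rightarrow> ('m^3) set \<Rightarrow> bool" where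
  "orientation e OR \<longleftrightarrow> (\<exists>b. dbasis e b \<and> OR = {b'. dbasis e b' \<and> same_or e b b'})"

definition scalar_product :: "('m::real_vector \<Rightarrow> 'm) \<Rightarrow> ('m \<Rightarrow> 'm \<Rightarrow> dual) \<Rightarrow> bool" where
  "scalar_product e sp \<longleftrightarrow>
     (\<forall>x y. sp x y = sp y x) \<and>
     (\<forall>x y w. sp (x + y) w = sp x w + sp y w) \<and>
     (\<forall>c x y. sp (dscale e c x) y = c * sp x y) \<and>
     (\<forall>x. re (sp x x) \<ge> 0 \<and> (re (sp x x) = 0 \<longleftrightarrow> x \<in> range e))"

definition dmodule3 :: "('m::real_vector \<Rightarrow> 'm) \<Rightarrow> ('m \<Rightarrow> 'm \<Rightarrow> dual) \<Rightarrow> ('m^3) set \<Rightarrow> bool" where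
  "dmodule3 e sp OR \<longleftrightarrow> linear e \<and> (\<forall>x. e (e x) = 0) \<and> (\<exists>b. dbasis e b)
     \<and> scalar_product e sp \<and> orientation e OR"

definition Epts :: "('m::real_vector \<Rightarrow> 'm) \<Rightarrow> ('m \<Rightarrow> 'm \<Rightarrow> dual) \<Rightarrow> 'm set set" where
  "Epts e sp = {P. subspace P \<and> dim P = 3 \<and> (\<forall>x\<in>P. \<forall>y\<in>P. du (sp x y) = 0) \<and> P \<inter> range e = {0}}"

definition levi :: "3 \<Rightarrow> 3 \<Rightarrow> 3 \<Rightarrow> real" where
  "levi i j k = (if (i,j,k) \<in> {(1,2,3),(2,3,1),(3,1,2)} then 1
                 else if (i,j,k) \<in> {(1,3,2),(3,2,1),(2,1,3)} then -1 else 0)"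

text \<open>Vectors of V = M/eM are represented by elements of M (modulo range e).
  Ediff e sp OR A B x means B - A = pi(x): for a positive orthonormal basis of V
  lifted to u1,u2,u3 in A, with pi(x) = d^k pi(u_k), the lift of the basis to B is
  u_i + e(levi i j k d^k u_j).\<close>
definition Ediff :: "('m::real_vector \<Rightarrow> 'm) \<Rightarrow> ('m \<Rightarrow> 'm \<Rightarrow> dual) \<Rightarrow> ('m^3) set
                     \<Rightarrow> 'm set \<Rightarrow> 'm set \<Rightarrow> 'm \<Rightarrow> bool" where
  "Ediff e sp OR A B x \<longleftrightarrow> (\<exists>(u::'m^3) (d::real^3).
      (\<forall>i. u$i \<in> A) \<and> (\<forall>i j. re (sp (u$i) (u$j)) = (if i = j then 1 else 0)) \<and> u \<in> OR \<and>
      x - (\<Sum>k\<in>UNIV. d$k *\<^sub>R u$k) \<in> range e \<and>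
      (\<forall>i. u$i + e (\<Sum>j\<in>UNIV. \<Sum>k\<in>UNIV. (levi i j k * d$k) *\<^sub>R u$j) \<in> B))"

definition Eline :: "('m::real_vector \<Rightarrow> 'm) \<Rightarrow> ('m \<Rightarrow> 'm \<Rightarrow> dual) \<Rightarrow> ('m^3) set
                     \<Rightarrow> 'm set \<Rightarrow> 'm \<Rightarrow> 'm set set" where
  "Eline e sp OR A v = {B \<in> Epts e sp. \<exists>t x. Ediff e sp OR A B x \<and> x - t *\<^sub>R v \<in> range e}"

definition Eplane :: "('m::real_vector \<Rightarrow> 'm) \<Rightarrow> ('m \<Rightarrow> 'm \<Rightarrow> dual) \<Rightarrow> ('m^3) set
                     \<Rightarrow> 'm set \<Rightarrow> 'm \<Rightarrow> 'm \<Rightarrow> 'm set set" where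
  "Eplane e sp OR A v w = {B \<in> Epts e sp. \<exists>s t x. Ediff e sp OR A B x \<and> x - s *\<^sub>R v - t *\<^sub>R w \<in> range e}"

definition is_Eplane :: "('m::real_vector \<Rightarrow> 'm) \<Rightarrow> ('m \<Rightarrow> 'm \<Rightarrow> dual) \<Rightarrow> ('m^3) set
                     \<Rightarrow> 'm set set \<Rightarrow> bool" where
  "is_Eplane e sp OR S \<longleftrightarrow> (\<exists>A\<in>Epts e sp. \<exists>v w.
      (\<forall>s t. s *\<^sub>R v + t *\<^sub>R w \<in> range e \<longrightarrow> s = 0 \<and> t = 0) \<and> S = Eplane e sp OR A v w)"

definition dec :: "('m::real_vector \<Rightarrow> 'm) \<Rightarrow> ('m \<Rightarrow> 'm \<Rightarrow> dual) \<Rightarrow> 'm \<Rightarrow> real \<times> real \<times> 'm" where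
  "dec e sp z = (THE (a, b, u). a > 0 \<and> z = dscale e (Dual a b) u \<and> sp u u = 1)"

definition pitch :: "('m::real_vector \<Rightarrow> 'm) \<Rightarrow> ('m \<Rightarrow> 'm \<Rightarrow> dual) \<Rightarrow> 'm \<Rightarrow> real" where
  "pitch e sp z = (case dec e sp z of (a, b, u) \<Rightarrow> b / a)"

definition unitpart :: "('m::real_vector \<Rightarrow> 'm) \<Rightarrow> ('m \<Rightarrow> 'm \<Rightarrow> dual) \<Rightarrow> 'm \<Rightarrow> 'm" where
  "unitpart e sp z = snd (snd (dec e sp z))"

text \<open>The axis: the line {P in E. u in P}; its direction is pi(u).\<close>
definition screw_axis :: "('m::real_vector \<Rightarrow> 'm) \<Rightarrow> ('m \<Rightarrow> 'm \<Rightarrow> dual) \<Rightarrow> 'm \<Rightarrow> 'm set set" where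
  "screw_axis e sp z = {P \<in> Epts e sp. unitpart e sp z \<in> P}"

end

theory Submission
  imports Defs
begin

unbundle cross3_syntax


lemma re_add[simp]: "re (x + y) = re x + re y" by (simp add: plus_dual_def)
lemma du_add[simp]: "du (x + y) = du x + du y" by (simp add: plus_dual_def)
lemma re_diff[simp]: "re (x - y) = re x - re y" by (simp add: minus_dual_def)
lemma du_diff[simp]: "du (x - y) = du x - du y" by (simp add: minus_dual_def)
lemma re_uminus[simp]: "re (- x) = - re x" by (simp add: uminus_dual_def)
lemma du_uminus[simp]: "du (- x) = - du x" by (simp add: uminus_dual_def)
lemma re_mult[simp]: "re (x * y) = re x * re y" by (simp add: times_dual_def)
lemma du_mult[simp]: "du (x * y) = re x * du y + du x * re y" by (simp add: times_dual_def)
lemma re_zero[simp]: "re 0 = 0" by (simp add: zero_dual_def)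
lemma du_zero[simp]: "du 0 = 0" by (simp add: zero_dual_def)
lemma re_one[simp]: "re 1 = 1" by (simp add: one_dual_def)
lemma du_one[simp]: "du 1 = 0" by (simp add: one_dual_def)
lemma dual_eq_iff: "x = y \<longleftrightarrow> re x = re y \<and> du x = du y" by (auto intro: dual.expand)
lemma re_sum[simp]: "re (sum g S) = (\<Sum>i\<in>S. re (g i))"
  by (induction S rule: infinite_finite_induct) auto
lemma du_sum[simp]: "du (sum g S) = (\<Sum>i\<in>S. du (g i))"
  by (induction S rule: infinite_finite_induct) auto

locale dm =
  fixes e :: "'m::real_vector \<Rightarrow> 'm" and sp :: "'m \<Rightarrow> 'm \<Rightarrow> dual" and OR :: "('m^3) set"
  assumes dm: "dmodule3 e sp OR"
begin

lemma lin_e: "linear e" using dm by (simp add: dmodule3_def)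
lemma ee[simp]: "e (e x) = 0" using dm by (simp add: dmodule3_def)
lemma e_add[simp]: "e (x + y) = e x + e y" using linear_add[OF lin_e] .
lemma e_scale[simp]: "e (c *\<^sub>R x) = c *\<^sub>R e x" using linear_scale[OF lin_e] .
lemma e_zero[simp]: "e 0 = 0" using linear_0[OF lin_e] .
lemma e_diff[simp]: "e (x - y) = e x - e y" using linear_diff[OF lin_e] .
lemma e_minus[simp]: "e (- x) = - e x" using linear_neg[OF lin_e] .
lemma e_sum[simp]: "e (sum g S) = (\<Sum>i\<in>S. e (g i))" using linear_sum[OF lin_e] .

lemma spS: "scalar_product e sp" using dm by (simp add: dmodule3_def)
lemma sp_sym: "sp x y = sp y x" using spS unfolding scalar_product_def by blast
lemma sp_add_left[simp]: "sp (x+y) w = sp x w + sp y w" using spS unfolding scalar_product_def by blast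
lemma sp_dscale_left[simp]: "sp (dscale e c x) y = c * sp x y" using spS unfolding scalar_product_def by blast
lemma sp_pos: "re (sp x x) \<ge> 0" using spS by (simp add: scalar_product_def)
lemma sp_zero_iff: "re (sp x x) = 0 \<longleftrightarrow> x \<in> range e" using spS by (simp add: scalar_product_def)

lemma sp_add_right[simp]: "sp w (x+y) = sp w x + sp w y" by (metis sp_sym sp_add_left)
lemma sp_dscale_right[simp]: "sp y (dscale e c x) = c * sp y x" by (metis sp_sym sp_dscale_left)

lemma dscale_real: "dscale e (Dual c 0) x = c *\<^sub>R x" by (simp add: dscale_def)
lemma dscale_eps: "dscale e (Dual 0 c) x = c *\<^sub>R e x" by (simp add: dscale_def)

lemma sp_scaleR_left[simp]: "sp (c *\<^sub>R x) y = Dual c 0 * sp x y"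
  by (metis dscale_real sp_dscale_left)
lemma sp_scaleR_right[simp]: "sp y (c *\<^sub>R x) = Dual c 0 * sp y x"
  by (metis sp_sym sp_scaleR_left)
lemma sp_e_left[simp]: "sp (e x) y = Dual 0 1 * sp x y"
  by (metis dscale_eps scaleR_one sp_dscale_left)
lemma sp_e_right[simp]: "sp y (e x) = Dual 0 1 * sp y x"
  by (metis sp_sym sp_e_left)
lemma sp_zero_left[simp]: "sp 0 y = 0"
  by (metis sp_scaleR_left scaleR_zero_left mult_zero_right dual_eq_iff re_mult du_mult re_zero du_zero dual.sel mult_zero_left add_0)
lemma sp_zero_right[simp]: "sp y 0 = 0" by (metis sp_sym sp_zero_left)
lemma sp_minus_left[simp]: "sp (- x) y = - sp x y"
  by (metis add_eq_0_iff2 sp_add_left sp_zero_left add.right_inverse)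
lemma sp_minus_right[simp]: "sp y (- x) = - sp y x" by (metis sp_sym sp_minus_left)
lemma sp_diff_left[simp]: "sp (x - z) y = sp x y - sp z y"
  by (metis diff_conv_add_uminus sp_add_left sp_minus_left)
lemma sp_diff_right[simp]: "sp y (x - z) = sp y x - sp y z" by (metis sp_sym sp_diff_left)
lemma sp_sum_left: "sp (sum g S) y = (\<Sum>i\<in>S. sp (g i) y)"
  by (induction S rule: infinite_finite_induct) auto
lemma sp_sum_right: "sp y (sum g S) = (\<Sum>i\<in>S. sp y (g i))"
  by (induction S rule: infinite_finite_induct) auto

lemma dscale_add_right: "dscale e c (x + y) = dscale e c x + dscale e c y"
  by (simp add: dscale_def algebra_simps)
lemma dscale_add_left: "dscale e (c + d) x = dscale e c x + dscale e d x"
  by (simp add: dscale_def algebra_simps)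
lemma dscale_mult: "dscale e c (dscale e d x) = dscale e (c * d) x"
  by (simp add: dscale_def algebra_simps)
lemma dscale_one[simp]: "dscale e 1 x = x" by (simp add: dscale_def)
lemma dscale_zero[simp]: "dscale e 0 x = 0" by (simp add: dscale_def)
lemma e_dscale: "e (dscale e c x) = re c *\<^sub>R e x" by (simp add: dscale_def)
lemma dscale_sum_right: "dscale e c (sum g S) = (\<Sum>i\<in>S. dscale e c (g i))"
  by (simp add: dscale_def scaleR_sum_right sum.distrib)
lemma dscale_sum_left: "dscale e (sum g S) x = (\<Sum>i\<in>S. dscale e (g i) x)"
  by (simp add: dscale_def scaleR_sum_left sum.distrib)
lemma dscale_alt: "dscale e c x = re c *\<^sub>R x + du c *\<^sub>R e x" by (simp add: dscale_def)

lemma range_e_subspace: "subspace (range e)"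
  using linear_subspace_image[OF lin_e subspace_UNIV] by simp


lemma dscale_minus_left: "dscale e (- c) x = - dscale e c x" by (simp add: dscale_def)
lemma dscale_minus_right: "dscale e c (- x) = - dscale e c x" by (simp add: dscale_def)
lemma dscale_diff_right: "dscale e c (x - y) = dscale e c x - dscale e c y"
  by (simp add: dscale_def algebra_simps)

lemma dscale_mod: "dscale e c x - re c *\<^sub>R x \<in> range e"
proof -
  have "dscale e c x - re c *\<^sub>R x = e (du c *\<^sub>R x)" by (simp add: dscale_def)
  then show ?thesis by (metis rangeI)
qed

lemma sum_mod:
  fixes c :: "dual^3" and b :: "'m^3"
  shows "(\<Sum>k\<in>UNIV. dscale e (c$k) (b$k)) - (\<Sum>k\<in>UNIV. re (c$k) *\<^sub>R b$k) \<in> range e"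
proof -
  have "(\<Sum>k\<in>UNIV. dscale e (c$k) (b$k)) - (\<Sum>k\<in>UNIV. re (c$k) *\<^sub>R b$k)
     = (\<Sum>k\<in>UNIV. dscale e (c$k) (b$k) - re (c$k) *\<^sub>R b$k)" by (simp add: sum_subtractf)
  also have "\<dots> \<in> range e"
    by (rule subspace_sum[OF range_e_subspace]) (use dscale_mod in auto)
  finally show ?thesis .
qed

lemma dbasis_unique:
  assumes "dbasis e b" "(\<Sum>k\<in>UNIV. dscale e (c$k) (b$k)) = (\<Sum>k\<in>UNIV. dscale e (c'$k) (b$k))"
  shows "c = c'"
  using assms unfolding dbasis_def by metis

lemma dbasis_ex:
  assumes "dbasis e b" obtains c where "x = (\<Sum>k\<in>UNIV. dscale e (c$k) (b$k))"
  using assms unfolding dbasis_def by metis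

lemma rindep:
  assumes b: "dbasis e b" and r: "(\<Sum>k\<in>UNIV. l$k *\<^sub>R b$k) \<in> range e"
  shows "l = 0"
proof -
  obtain w where w: "(\<Sum>k\<in>UNIV. l$k *\<^sub>R b$k) = e w" using r by auto
  obtain c where c: "w = (\<Sum>k\<in>UNIV. dscale e (c$k) (b$k))" using dbasis_ex[OF b] by blast
  have 1: "e w = (\<Sum>k\<in>UNIV. dscale e ((\<chi> k. Dual 0 (re (c$k)))$k) (b$k))"
    by (simp add: c e_dscale dscale_eps)
  have 2: "(\<Sum>k\<in>UNIV. l$k *\<^sub>R b$k) = (\<Sum>k\<in>UNIV. dscale e ((\<chi> k. Dual (l$k) 0)$k) (b$k))"
    by (simp add: dscale_real)
  have "(\<chi> k. Dual (l$k) 0) = (\<chi> k. Dual 0 (re (c$k)))"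
    using dbasis_unique[OF b] 1 2 w by metis
  then show ?thesis by (simp add: vec_eq_iff)
qed

definition nrm :: "dual \<Rightarrow> dual" where
  "nrm c = Dual (1 / sqrt (re c)) (- du c / (2 * re c * sqrt (re c)))"

lemma nrm_sq: "re c > 0 \<Longrightarrow> nrm c * (nrm c * c) = 1"
  by (simp add: nrm_def dual_eq_iff field_simps)

lemma re_nrm_pos: "re c > 0 \<Longrightarrow> re (nrm c) > 0"
  by (simp add: nrm_def)

definition Dinv :: "dual \<Rightarrow> dual" where
  "Dinv c = Dual (1 / re c) (- du c / (re c)^2)"

lemma Dinv_mult: "re c \<noteq> 0 \<Longrightarrow> Dinv c * c = 1"
  by (simp add: Dinv_def dual_eq_iff field_simps power2_eq_square)

lemma dscale_Dinv: "re c \<noteq> 0 \<Longrightarrow> dscale e (Dinv c) (dscale e c x) = x"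
  by (simp add: dscale_mult Dinv_mult)

lemma sp_pos_strict: "x \<notin> range e \<Longrightarrow> re (sp x x) > 0"
  using sp_pos[of x] sp_zero_iff[of x] by linarith

definition Nz :: "'m \<Rightarrow> 'm" where "Nz x = dscale e (nrm (sp x x)) x"

lemma Nz_unit: "x \<notin> range e \<Longrightarrow> sp (Nz x) (Nz x) = 1"
  using nrm_sq[OF sp_pos_strict] by (simp add: Nz_def)

definition inD :: "'m^3 \<Rightarrow> 'm \<Rightarrow> bool" where
  "inD f x \<longleftrightarrow> (\<exists>c. x = (\<Sum>k\<in>UNIV. dscale e (c$k) (f$k)))"

lemma inD_basis: "inD f (f$j)"
proof -
  have "\<And>k. dscale e ((\<chi> k. if k = j then 1 else 0)$k) (f$k) = (if k = j then f$k else 0)"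
    by simp
  then have "(\<Sum>k\<in>UNIV. dscale e ((\<chi> k. if k = j then 1 else 0)$k) (f$k)) = f$j"
    by simp
  then show ?thesis unfolding inD_def by metis
qed

lemma inD_add: "inD f x \<Longrightarrow> inD f y \<Longrightarrow> inD f (x + y)"
proof -
  assume "inD f x" "inD f y"
  then obtain c d where c: "x = (\<Sum>k\<in>UNIV. dscale e (c$k) (f$k))" and d: "y = (\<Sum>k\<in>UNIV. dscale e (d$k) (f$k))"
    unfolding inD_def by blast
  have "x + y = (\<Sum>k\<in>UNIV. dscale e ((c + d)$k) (f$k))"
    by (simp add: c d dscale_add_left sum.distrib)
  then show ?thesis unfolding inD_def by blast
qed

lemma inD_dscale: "inD f x \<Longrightarrow> inD f (dscale e a x)"
proof -
  assume "inD f x"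
  then obtain c where c: "x = (\<Sum>k\<in>UNIV. dscale e (c$k) (f$k))" unfolding inD_def by blast
  have "dscale e a x = (\<Sum>k\<in>UNIV. dscale e ((\<chi> k. a * c$k)$k) (f$k))"
    by (simp add: c dscale_sum_right dscale_mult)
  then show ?thesis unfolding inD_def by blast
qed

definition orthonormal :: "'m^3 \<Rightarrow> bool" where
  "orthonormal f \<longleftrightarrow> (\<forall>i j. sp (f$i) (f$j) = (if i = j then 1 else 0))"

lemma ortho_coeff:
  assumes "orthonormal f"
  shows "sp (\<Sum>k\<in>UNIV. dscale e (c$k) (f$k)) (f$j) = c$j"
proof -
  have "sp (\<Sum>k\<in>UNIV. dscale e (c$k) (f$k)) (f$j) = (\<Sum>k\<in>UNIV. c$k * sp (f$k) (f$j))"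
    by (simp add: sp_sum_left)
  also have "\<dots> = (\<Sum>k\<in>UNIV. if k = j then c$k else 0)"
    by (rule sum.cong) (use assms in \<open>auto simp: orthonormal_def\<close>)
  also have "\<dots> = c$j" by simp
  finally show ?thesis .
qed

lemma ortho_dbasis:
  assumes o: "orthonormal f" and sp: "\<And>x. inD f x"
  shows "dbasis e f"
  unfolding dbasis_def
proof
  fix x
  obtain c where c: "x = (\<Sum>k\<in>UNIV. dscale e (c$k) (f$k))" using sp[of x] unfolding inD_def by blast
  show "\<exists>!c. x = (\<Sum>k\<in>UNIV. dscale e (c$k) (f$k))"
  proof (rule ex1I[of _ c])
    show "x = (\<Sum>k\<in>UNIV. dscale e (c$k) (f$k))" by fact
    fix c' assume "x = (\<Sum>k\<in>UNIV. dscale e (c'$k) (f$k))"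
    then have "\<forall>j. c'$j = c$j" using ortho_coeff[OF o] c by metis
    then show "c' = c" by (simp add: vec_eq_iff)
  qed
qed


lemma dscale_diff_left: "dscale e (c - d) x = dscale e c x - dscale e d x"
  by (simp add: dscale_def algebra_simps)

lemma not_in_range:
  assumes b: "dbasis e b" and x: "x = (\<Sum>k\<in>UNIV. dscale e (C$k) (b$k))" and r: "re (C$j) \<noteq> 0"
  shows "x \<notin> range e"
proof
  assume "x \<in> range e"
  then have "x - (x - (\<Sum>k\<in>UNIV. re (C$k) *\<^sub>R b$k)) \<in> range e"
    using sum_mod[of C b] x subspace_diff[OF range_e_subspace, of x "x - (\<Sum>k\<in>UNIV. re (C$k) *\<^sub>R b$k)"] by simp
  then have "(\<Sum>k\<in>UNIV. (\<chi> k. re (C$k))$k *\<^sub>R b$k) \<in> range e" by simp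
  then have "(\<chi> k. re (C$k)) = 0" by (rule rindep[OF b])
  then show False using r by (simp add: vec_eq_iff)
qed

lemma GS:
  assumes b: "dbasis e b"
  obtains f where "orthonormal f" "dbasis e f"
proof -
  define b1 where "b1 = b$1"
  define b2 where "b2 = b$2"
  define b3 where "b3 = b$3"
  have nb1: "b1 \<notin> range e"
    by (rule not_in_range[OF b, of _ "vector [1,0,0]" 1]) (simp_all add: b1_def sum_3)
  define n1 where "n1 = nrm (sp b1 b1)"
  define f1 where "f1 = dscale e n1 b1"
  have pn1: "re (sp b1 b1) > 0" using sp_pos_strict[OF nb1] .
  have f11: "sp f1 f1 = 1" using nrm_sq[OF pn1] by (simp add: f1_def n1_def)
  define c21 where "c21 = sp b2 f1"
  define g2 where "g2 = b2 - dscale e c21 f1"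
  have g2e: "g2 = (\<Sum>k\<in>UNIV. dscale e ((vector [-(c21*n1), 1, 0] :: dual^3)$k) (b$k))"
    by (simp add: sum_3 g2_def f1_def b1_def b2_def dscale_mult dscale_minus_left)
  have ng2: "g2 \<notin> range e"
    by (rule not_in_range[OF b g2e, of 2]) simp
  define n2 where "n2 = nrm (sp g2 g2)"
  define f2 where "f2 = dscale e n2 g2"
  have pn2: "re (sp g2 g2) > 0" using sp_pos_strict[OF ng2] .
  have f22: "sp f2 f2 = 1" using nrm_sq[OF pn2] by (simp add: f2_def n2_def)
  have g21: "sp g2 f1 = 0" by (simp add: g2_def c21_def f11)
  have f21: "sp f2 f1 = 0" by (simp add: f2_def g21)
  have f12: "sp f1 f2 = 0" using f21 sp_sym by metis
  define c31 where "c31 = sp b3 f1"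
  define c32 where "c32 = sp b3 f2"
  define g3 where "g3 = b3 - dscale e c31 f1 - dscale e c32 f2"
  have g3e: "g3 = (\<Sum>k\<in>UNIV. dscale e ((vector [c32*n2*(c21*n1) - c31*n1, -(c32*n2), 1] :: dual^3)$k) (b$k))"
  proof -
    have "g3 = b3 - dscale e (c31*n1) b1 - (dscale e (c32*n2) b2 - dscale e (c32*n2*(c21*n1)) b1)"
      unfolding g3_def g2_def f2_def f1_def by (simp only: dscale_mult dscale_diff_right mult.assoc)
    moreover have "(\<Sum>k\<in>UNIV. dscale e ((vector [c32*n2*(c21*n1) - c31*n1, -(c32*n2), 1] :: dual^3)$k) (b$k))
       = (dscale e (c32*n2*(c21*n1)) b1 - dscale e (c31*n1) b1) + - dscale e (c32*n2) b2 + b3"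
      unfolding sum_3 vector_3 b1_def b2_def b3_def by (simp only: dscale_diff_left dscale_minus_left dscale_one)
    moreover have "\<And>b3 X Y Z::'m. b3 - X - (Y - Z) = (Z - X) + - Y + b3" by (simp add: algebra_simps)
    ultimately show ?thesis by metis
  qed
  have ng3: "g3 \<notin> range e"
    by (rule not_in_range[OF b g3e, of 3]) simp
  define n3 where "n3 = nrm (sp g3 g3)"
  define f3 where "f3 = dscale e n3 g3"
  have pn3: "re (sp g3 g3) > 0" using sp_pos_strict[OF ng3] .
  have f33: "sp f3 f3 = 1" using nrm_sq[OF pn3] by (simp add: f3_def n3_def)
  have g31: "sp g3 f1 = 0" by (simp add: g3_def c31_def f11 f21)
  have g32: "sp g3 f2 = 0" by (simp add: g3_def c32_def f22 f12)
  have f31: "sp f3 f1 = 0" by (simp add: f3_def g31)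
  have f32: "sp f3 f2 = 0" by (simp add: f3_def g32)
  have f13: "sp f1 f3 = 0" using f31 sp_sym by metis
  have f23: "sp f2 f3 = 0" using f32 sp_sym by metis
  define f where "f = (vector [f1, f2, f3] :: 'm^3)"
  have o: "orthonormal f"
    unfolding orthonormal_def forall_3 f_def by (simp add: f11 f22 f33 f12 f13 f21 f23 f31 f32)
  have i1: "inD f f1" using inD_basis[of f 1] by (simp add: f_def)
  have i2: "inD f f2" using inD_basis[of f 2] by (simp add: f_def)
  have i3: "inD f f3" using inD_basis[of f 3] by (simp add: f_def)
  have rn1: "re n1 \<noteq> 0" using re_nrm_pos[OF pn1] n1_def by simp
  have rn2: "re n2 \<noteq> 0" using re_nrm_pos[OF pn2] n2_def by simp
  have rn3: "re n3 \<noteq> 0" using re_nrm_pos[OF pn3] n3_def by simp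
  have eb1: "b1 = dscale e (Dinv n1) f1" using dscale_Dinv[OF rn1] by (simp add: f1_def)
  have eb2: "b2 = dscale e (Dinv n2) f2 + dscale e c21 f1" using dscale_Dinv[OF rn2] by (simp add: f2_def g2_def)
  have eb3: "b3 = dscale e (Dinv n3) f3 + dscale e c31 f1 + dscale e c32 f2"
    using dscale_Dinv[OF rn3] by (simp add: f3_def g3_def)
  have ib1: "inD f b1" unfolding eb1 by (rule inD_dscale[OF i1])
  have ib2: "inD f b2" unfolding eb2 by (intro inD_add inD_dscale i1 i2)
  have ib3: "inD f b3" unfolding eb3 by (intro inD_add inD_dscale i1 i2 i3)
  have all: "inD f x" for x
  proof -
    obtain c where c: "x = (\<Sum>k\<in>UNIV. dscale e (c$k) (b$k))" using dbasis_ex[OF b] by blast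
    show ?thesis unfolding c sum_3 b1_def[symmetric] b2_def[symmetric] b3_def[symmetric]
      by (intro inD_add inD_dscale ib1 ib2 ib3)
  qed
  show ?thesis using that[OF o ortho_dbasis[OF o all]] .
qed


lemma OR_form: obtains b0 where "dbasis e b0" "OR = {b'. dbasis e b' \<and> same_or e b0 b'}"
proof -
  have "orientation e OR" using dm by (simp add: dmodule3_def)
  then show ?thesis using that unfolding orientation_def by metis
qed

lemma coeffs_ex:
  assumes "dbasis e b0"
  obtains A :: "dual^3^3" where "\<forall>j. f$j = (\<Sum>k\<in>UNIV. dscale e (A$j$k) (b0$k))"
proof -
  have "\<forall>j. \<exists>c. f$j = (\<Sum>k\<in>UNIV. dscale e (c$k) (b0$k))"
  proof
    fix j show "\<exists>c. f$j = (\<Sum>k\<in>UNIV. dscale e (c$k) (b0$k))"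
      using dbasis_ex[OF assms, of "f$j"] by blast
  qed
  then have "\<exists>g. \<forall>j. f$j = (\<Sum>k\<in>UNIV. dscale e ((g j)$k) (b0$k))" by (rule choice)
  then obtain g where "\<forall>j. f$j = (\<Sum>k\<in>UNIV. dscale e ((g j)$k) (b0$k))" by blast
  then show ?thesis using that[of "\<chi> j. g j"] by simp
qed

lemma frame_exists: obtains f where "orthonormal f" "dbasis e f" "f \<in> OR"
proof -
  obtain b0 where b0: "dbasis e b0" and ORe: "OR = {b'. dbasis e b' \<and> same_or e b0 b'}"
    using OR_form by blast
  obtain f where o: "orthonormal f" and fb: "dbasis e f" using GS[OF b0] by blast
  obtain A where A: "\<forall>j. f$j = (\<Sum>k\<in>UNIV. dscale e (A$j$k) (b0$k))" using coeffs_ex[OF b0] by blast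
  define R where "R = (\<chi> j k. re (A$j$k))"
  have oo: "sp (f$i) (f$j) = (if i = j then 1 else 0)" for i j using o by (simp add: orthonormal_def)
  have dR: "det R \<noteq> 0"
  proof
    assume "det R = 0"
    then have "det (matrix ((*v) (transpose R))) = 0" by (simp add: det_transpose)
    then have "\<not> inj ((*v) (transpose R))" using det_nz_iff_inj[of "(*v) (transpose R)"] by simp
    then obtain l where l: "transpose R *v l = 0" "l \<noteq> 0"
      using linear_injective_0[of "(*v) (transpose R)"] by auto
    have lk: "(\<Sum>j\<in>UNIV. l$j * re (A$j$k)) = 0" for k
      using l(1) by (simp add: vec_eq_iff matrix_vector_mult_def transpose_def R_def mult.commute)
    define y where "y = (\<Sum>j\<in>UNIV. l$j *\<^sub>R f$j)"
    have "y - (\<Sum>j\<in>UNIV. l$j *\<^sub>R (\<Sum>k\<in>UNIV. re (A$j$k) *\<^sub>R b0$k))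
        = (\<Sum>j\<in>UNIV. l$j *\<^sub>R (f$j - (\<Sum>k\<in>UNIV. re (A$j$k) *\<^sub>R b0$k)))"
      by (simp add: y_def scaleR_diff_right sum_subtractf)
    also have "\<dots> \<in> range e"
    proof (rule subspace_sum[OF range_e_subspace], rule subspace_scale[OF range_e_subspace])
      fix j
      show "f$j - (\<Sum>k\<in>UNIV. re (A$j$k) *\<^sub>R b0$k) \<in> range e"
        using sum_mod[of "A$j" b0] A by simp
    qed
    finally have 1: "y - (\<Sum>j\<in>UNIV. l$j *\<^sub>R (\<Sum>k\<in>UNIV. re (A$j$k) *\<^sub>R b0$k)) \<in> range e" .
    have "(\<Sum>j\<in>UNIV. l$j *\<^sub>R (\<Sum>k\<in>UNIV. re (A$j$k) *\<^sub>R b0$k))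
        = (\<Sum>j\<in>UNIV. \<Sum>k\<in>UNIV. (l$j * re (A$j$k)) *\<^sub>R b0$k)"
      by (simp add: scaleR_sum_right)
    also have "\<dots> = (\<Sum>k\<in>UNIV. \<Sum>j\<in>UNIV. (l$j * re (A$j$k)) *\<^sub>R b0$k)"
      by (rule sum.swap)
    also have "\<dots> = (\<Sum>k\<in>UNIV. (\<Sum>j\<in>UNIV. l$j * re (A$j$k)) *\<^sub>R b0$k)"
      by (simp add: scaleR_sum_left)
    also have "\<dots> = 0" by (simp add: lk)
    finally have "y \<in> range e" using 1 by simp
    then have "re (sp y y) = 0" using sp_zero_iff by blast
    moreover have "re (sp y y) = (\<Sum>j\<in>UNIV. (l$j)^2)"
      by (simp add: y_def sp_sum_left sp_sum_right oo sum_3 power2_eq_square)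
    ultimately have "\<forall>j\<in>UNIV. (l$j)^2 = 0"
      using sum_nonneg_eq_0_iff[of UNIV "\<lambda>j. (l$j)^2"] by simp
    then have "l = 0" by (simp add: vec_eq_iff)
    then show False using l(2) by simp
  qed
  show ?thesis
  proof (cases "det R > 0")
    case True
    have "same_or e b0 f" unfolding same_or_def
      by (rule exI[of _ A]) (use A True in \<open>simp add: R_def\<close>)
    then have "f \<in> OR" unfolding ORe using fb by simp
    then show ?thesis using that o fb by blast
  next
    case False
    then have neg: "det R < 0" using dR by simp
    define f' where "f' = (vector [f$1, f$2, -(f$3)] :: 'm^3)"
    have o': "orthonormal f'"
      unfolding orthonormal_def forall_3 f'_def by (simp add: oo)
    have i': "inD f' x" for x
    proof -
      obtain c where c: "x = (\<Sum>k\<in>UNIV. dscale e (c$k) (f$k))" using dbasis_ex[OF fb] by blast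
      have "x = (\<Sum>k\<in>UNIV. dscale e ((vector [c$1, c$2, -(c$3)] :: dual^3)$k) (f'$k))"
        by (simp add: c sum_3 f'_def dscale_minus_left dscale_minus_right)
      then show ?thesis unfolding inD_def by blast
    qed
    have fb': "dbasis e f'" by (rule ortho_dbasis[OF o' i'])
    define A' where "A' = (\<chi> j k. if j = 3 then -(A$j$k) else A$j$k)"
    have A': "\<forall>j. f'$j = (\<Sum>k\<in>UNIV. dscale e (A'$j$k) (b0$k))"
      unfolding forall_3 using A by (simp add: f'_def A'_def dscale_minus_left sum_negf)
    have "det (\<chi> j k. re (A'$j$k)) = - det R"
      by (simp add: det_3 A'_def R_def)
    then have "det (\<chi> j k. re (A'$j$k)) > 0" using neg by simp
    then have "same_or e b0 f'" unfolding same_or_def using A' by blast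
    then have "f' \<in> OR" unfolding ORe using fb' by simp
    then show ?thesis using that o' fb' by blast
  qed
qed

lemma OR_shift:
  assumes g: "g \<in> OR" and hg: "\<forall>j. h$j - g$j \<in> range e" and hb: "dbasis e h"
  shows "h \<in> OR"
proof -
  obtain b0 where b0: "dbasis e b0" and ORe: "OR = {b'. dbasis e b' \<and> same_or e b0 b'}"
    using OR_form by blast
  have "same_or e b0 g" using g ORe by simp
  then obtain A where A: "\<forall>j. g$j = (\<Sum>k\<in>UNIV. dscale e (A$j$k) (b0$k))"
    and dA: "det (\<chi> j k. re (A$j$k)) > 0"
    unfolding same_or_def by blast
  have "\<forall>j. \<exists>w. h$j - g$j = e w" using hg by blast
  then have "\<exists>w. \<forall>j. h$j - g$j = e (w j)" by (rule choice)
  then obtain w where w: "\<forall>j. h$j - g$j = e (w j)" by blast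
  obtain C where C: "\<forall>j. (\<chi> j. w j)$j = (\<Sum>k\<in>UNIV. dscale e (C$j$k) (b0$k))"
    using coeffs_ex[OF b0] by blast
  define A' where "A' = (\<chi> j k. A$j$k + Dual 0 (re (C$j$k)))"
  have hA': "\<forall>j. h$j = (\<Sum>k\<in>UNIV. dscale e (A'$j$k) (b0$k))"
  proof
    fix j
    have 1: "h$j = g$j + e (w j)" using w[rule_format, of j] by (simp add: algebra_simps)
    have "w j = (\<Sum>k\<in>UNIV. dscale e (C$j$k) (b0$k))" using C[rule_format, of j] by simp
    then have 2: "e (w j) = (\<Sum>k\<in>UNIV. re (C$j$k) *\<^sub>R e (b0$k))"
      by (simp add: e_dscale)
    have 3: "(\<Sum>k\<in>UNIV. dscale e (A'$j$k) (b0$k))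
       = (\<Sum>k\<in>UNIV. dscale e (A$j$k) (b0$k)) + (\<Sum>k\<in>UNIV. re (C$j$k) *\<^sub>R e (b0$k))"
      by (simp add: A'_def dscale_add_left dscale_eps sum.distrib)
    show "h$j = (\<Sum>k\<in>UNIV. dscale e (A'$j$k) (b0$k))"
      unfolding 1 2 3 using A[rule_format, of j] by simp
  qed
  have eqR: "(\<chi> j k. re (A'$j$k)) = (\<chi> j k. re (A$j$k))" by (simp add: A'_def)
  have "same_or e b0 h" unfolding same_or_def
    by (rule exI[of _ A']) (simp add: hA' eqR dA)
  then show ?thesis using hb ORe by simp
qed

end



lemma levi_test: "(\<chi> j. \<Sum>k\<in>UNIV. levi i j k * d$k) = d \<times> axis i 1"
  unfolding vec_eq_iff forall_3 using exhaust_3[of i]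
  by (auto simp: levi_def sum_3 cross3_simps axis_def)

lemma sum_axis: "(\<Sum>k\<in>UNIV. c k *\<^sub>R (axis k 1 :: real^'n)) = (\<chi> k. c k)"
  by (simp add: vec_eq_iff axis_def if_distrib cong: if_cong)

lemma cross_sum_axis: "(\<Sum>k\<in>UNIV. c k *\<^sub>R (q \<times> axis k 1)) = q \<times> (\<chi> k. c k)"
  by (simp add: sum_3 cross3_simps axis_def)


locale frame = dm +
  fixes f :: "'a^3"
  assumes fo: "orthonormal f" and fb: "dbasis e f" and fOR: "f \<in> OR"
begin

definition cm :: "real^3 \<Rightarrow> real^3 \<Rightarrow> 'a" where
  "cm a b = (\<Sum>k\<in>UNIV. a$k *\<^sub>R f$k) + (\<Sum>k\<in>UNIV. b$k *\<^sub>R e (f$k))"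

lemma cm_dscale_form: "cm a b = (\<Sum>k\<in>UNIV. dscale e ((\<chi> k. Dual (a$k) (b$k))$k) (f$k))"
  by (simp add: cm_def dscale_def sum.distrib)

lemma cm_add: "cm (a + a') (b + b') = cm a b + cm a' b'"
  by (simp add: cm_def scaleR_add_left sum.distrib algebra_simps)

lemma cm_scale: "cm (c *\<^sub>R a) (c *\<^sub>R b) = c *\<^sub>R cm a b"
  by (simp add: cm_def scaleR_sum_right scaleR_add_right)

lemma cm_zero[simp]: "cm 0 0 = 0" by (simp add: cm_def)

lemma cm_minus: "cm (- a) (- b) = - cm a b"
  using cm_scale[of "-1" a b] by simp

lemma cm_diff: "cm (a - a') (b - b') = cm a b - cm a' b'"
  using cm_add[of a "- a'" b "- b'"] cm_minus[of a' b'] by simp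

lemma cm_sum: "cm (\<Sum>i\<in>S. a i) (\<Sum>i\<in>S. b i) = (\<Sum>i\<in>S. cm (a i) (b i))"
  by (induction S rule: infinite_finite_induct) (simp_all add: cm_add)

lemma e_cm[simp]: "e (cm a b) = cm 0 a"
  by (simp add: cm_def)

lemma sp_cm: "sp (cm a b) (cm a' b') = Dual (a \<bullet> a') (a \<bullet> b' + b \<bullet> a')"
proof -
  have "sp (cm a b) (cm a' b') = sp (cm a b) (\<Sum>k\<in>UNIV. dscale e ((\<chi> k. Dual (a'$k) (b'$k))$k) (f$k))"
    by (simp add: cm_dscale_form[of a' b'])
  also have "\<dots> = (\<Sum>k\<in>UNIV. Dual (a'$k) (b'$k) * sp (cm a b) (f$k))"
    by (simp add: sp_sum_right)
  also have "\<dots> = (\<Sum>k\<in>UNIV. Dual (a'$k) (b'$k) * Dual (a$k) (b$k))"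
  proof -
    have oc: "sp (cm a b) (f$j) = Dual (a$j) (b$j)" for j
      using ortho_coeff[OF fo, of "\<chi> k. Dual (a$k) (b$k)" j] cm_dscale_form[of a b] by simp
    show ?thesis by (simp add: oc)
  qed
  also have "\<dots> = Dual (a \<bullet> a') (a \<bullet> b' + b \<bullet> a')"
    by (simp add: dual_eq_iff inner_vec_def sum.distrib algebra_simps)
  finally show ?thesis .
qed

lemma cm_inj: "cm a b = cm a' b' \<Longrightarrow> a = a' \<and> b = b'"
proof -
  assume h: "cm a b = cm a' b'"
  have "\<forall>i. a$i = a'$i \<and> b$i = b'$i"
  proof
    fix i
    have "sp (cm a b) (cm (axis i 1) 0) = sp (cm a' b') (cm (axis i 1) 0)" using h by simp
    then show "a$i = a'$i \<and> b$i = b'$i" by (simp add: sp_cm inner_axis)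
  qed
  then show ?thesis by (simp add: vec_eq_iff)
qed

lemma cm_eq_iff: "cm a b = cm a' b' \<longleftrightarrow> a = a' \<and> b = b'"
  using cm_inj by blast

lemma cm_surj: obtains a b where "x = cm a b"
proof -
  obtain c where c: "x = (\<Sum>k\<in>UNIV. dscale e (c$k) (f$k))" using dbasis_ex[OF fb] by blast
  have "x = cm (\<chi> k. re (c$k)) (\<chi> k. du (c$k))"
    by (simp add: c cm_def dscale_def sum.distrib)
  then show ?thesis using that by blast
qed

lemma range_e_cm: "x \<in> range e \<longleftrightarrow> (\<exists>b. x = cm 0 b)"
proof
  assume "x \<in> range e"
  then obtain y where y: "x = e y" by blast
  obtain a b where "y = cm a b" using cm_surj by blast
  then show "\<exists>b. x = cm 0 b" using y by (intro exI[of _ a]) simp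
next
  assume "\<exists>b. x = cm 0 b"
  then obtain b where "x = cm 0 b" by blast
  then have "x = e (cm b 0)" by simp
  then show "x \<in> range e" by blast
qed

lemma cm_in_range: "cm a b \<in> range e \<longleftrightarrow> a = 0"
  unfolding range_e_cm cm_eq_iff by blast

lemma dscale_cm: "dscale e (Dual r s) (cm a b) = cm (r *\<^sub>R a) (r *\<^sub>R b + s *\<^sub>R a)"
proof -
  have "dscale e (Dual r s) (cm a b) = r *\<^sub>R cm a b + s *\<^sub>R cm 0 a" by (simp add: dscale_def)
  also have "\<dots> = cm (r *\<^sub>R a) (r *\<^sub>R b) + cm 0 (s *\<^sub>R a)"
    by (metis cm_scale scaleR_zero_right)
  also have "\<dots> = cm (r *\<^sub>R a) (r *\<^sub>R b + s *\<^sub>R a)" by (metis cm_add add_0_right)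
  finally show ?thesis .
qed

lemma f_cm: "f$i = cm (axis i 1) 0"
proof -
  have "(\<Sum>k\<in>UNIV. (axis i 1)$k *\<^sub>R f$k) = (\<Sum>k\<in>UNIV. (if k = i then f$k else 0))"
    by (rule sum.cong) (auto simp: axis_def)
  then show ?thesis by (simp add: cm_def)
qed


lemma triple_anti: "a \<bullet> (p \<times> a') + (p \<times> a) \<bullet> a' = 0"
  by (simp add: cross3_simps)

definition Pp :: "real^3 \<Rightarrow> 'a set" where "Pp p = range (\<lambda>a. cm a (p \<times> a))"

lemma lin_Pp: "linear (\<lambda>a. cm a (p \<times> a))"
  by (rule linearI) (simp_all add: cross_add_right cross_mult_right cm_add cm_scale)

lemma dim3: "dim (UNIV :: (real^3) set) = 3" by simp

lemma Pp_E: "Pp p \<in> Epts e sp"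
  unfolding Epts_def
proof (intro CollectI conjI ballI)
  show "subspace (Pp p)" unfolding Pp_def by (rule linear_subspace_image[OF lin_Pp subspace_UNIV])
  have "inj_on (\<lambda>a. cm a (p \<times> a)) (span UNIV)" by (auto simp: inj_on_def cm_eq_iff)
  then show "dim (Pp p) = 3" unfolding Pp_def using dim_image_eq[OF lin_Pp] dim3 by metis
  fix x y assume "x \<in> Pp p" "y \<in> Pp p"
  then obtain a a' where "x = cm a (p \<times> a)" "y = cm a' (p \<times> a')" unfolding Pp_def by blast
  then show "du (sp x y) = 0" by (simp add: sp_cm triple_anti)
next
  show "Pp p \<inter> range e = {0}"
  proof
    show "Pp p \<inter> range e \<subseteq> {0}"
    proof
      fix x assume "x \<in> Pp p \<inter> range e"
      then obtain a where "x = cm a (p \<times> a)" "cm a (p \<times> a) \<in> range e" unfolding Pp_def by blast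
      then show "x \<in> {0}" by (simp add: cm_in_range)
    qed
    have "0 = cm 0 (p \<times> 0)" by simp
    then have "0 \<in> Pp p" unfolding Pp_def by blast
    moreover have "(0::'a) \<in> range e" by (metis e_zero rangeI)
    ultimately show "{0} \<subseteq> Pp p \<inter> range e" by blast
  qed
qed

lemma Pp_mem: "cm a (p \<times> a) \<in> Pp p" unfolding Pp_def by blast

definition co1 :: "'a \<Rightarrow> real^3" where "co1 x = (\<chi> k. re (sp x (f$k)))"

lemma lin_co1: "linear co1"
  by (rule linearI) (simp_all add: co1_def vec_eq_iff)

lemma co1_cm[simp]: "co1 (cm a b) = a"
  by (simp add: co1_def f_cm sp_cm inner_axis vec_eq_iff)

lemma mem_P:
  assumes P: "P \<in> Epts e sp" and "cm a b \<in> P" "cm a b' \<in> P"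
  shows "b = b'"
proof -
  have sP: "subspace P" and iP: "P \<inter> range e = {0}" using P by (auto simp: Epts_def)
  have "cm a b - cm a b' \<in> P" using assms sP subspace_diff by blast
  moreover have "cm a b - cm a b' = cm 0 (b - b')" by (simp add: cm_diff[symmetric])
  moreover have "cm 0 (b - b') \<in> range e" by (simp add: cm_in_range)
  ultimately have "cm 0 (b - b') = cm 0 0" using iP by auto
  then show ?thesis using cm_eq_iff[of 0 "b - b'" 0 0] by simp
qed

lemma E_gen:
  assumes P: "P \<in> Epts e sp"
  shows "\<exists>p. \<forall>a. cm a (p \<times> a) \<in> P"
proof -
  have sP: "subspace P" and dP: "dim P = 3" and duP: "\<forall>x\<in>P. \<forall>y\<in>P. du (sp x y) = 0"
    and iP: "P \<inter> range e = {0}" using P by (auto simp: Epts_def)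
  have spanP: "span P = P" using sP by (simp add: span_eq_iff)
  have inj: "inj_on co1 (span P)"
  proof (rule inj_onI)
    fix x y assume x: "x \<in> span P" and y: "y \<in> span P" and xy: "co1 x = co1 y"
    obtain a b where ab: "x - y = cm a b" using cm_surj by blast
    have "co1 (x - y) = 0" using xy linear_diff[OF lin_co1] by simp
    then have "a = 0" using ab by simp
    then have "x - y \<in> range e" using ab cm_in_range by simp
    moreover have "x - y \<in> P" using x y spanP sP subspace_diff by blast
    ultimately have "x - y = 0" using iP by blast
    then show "x = y" by simp
  qed
  obtain Bs where Bs: "Bs \<subseteq> P" "independent Bs" "P \<subseteq> span Bs" "card Bs = dim P"
    using real_vector.basis_exists[of P] by blast
  have sBs: "span Bs \<subseteq> P" using Bs(1) sP by (simp add: span_minimal)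
  have injB: "inj_on co1 (span Bs)" using inj sBs spanP by (metis inj_on_subset)
  have indB: "independent (co1 ` Bs)"
    using real_vector.linear_independent_injective_image[OF lin_co1 Bs(2) injB] .
  have "card (co1 ` Bs) = card Bs"
    using card_image[of co1 Bs] injB span_superset[of Bs] inj_on_subset by blast
  then have "card (co1 ` Bs) = 3" using Bs(4) dP by simp
  then have "dim (span (co1 ` Bs)) = 3" using eucl.indep_card_eq_dim_span[OF indB] by simp
  then have "span (co1 ` Bs) = UNIV" using dim_eq_full[of "co1 ` Bs"] by simp
  moreover have "span (co1 ` Bs) \<subseteq> co1 ` P"
    using linear_subspace_image[OF lin_co1 sP] Bs(1) by (simp add: span_minimal image_mono)
  ultimately have surj: "co1 ` P = UNIV" by blast
  have "\<forall>i. \<exists>b. cm (axis i 1) b \<in> P"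
  proof
    fix i
    obtain x where x: "x \<in> P" "co1 x = axis i 1" using surj by (metis UNIV_I imageE)
    obtain a b where ab: "x = cm a b" using cm_surj by blast
    then show "\<exists>b. cm (axis i 1) b \<in> P" using x by auto
  qed
  then have "\<exists>B. \<forall>i. cm (axis i 1) (B i) \<in> P" by (rule choice)
  then obtain B where B: "\<forall>i. cm (axis i 1) (B i) \<in> P" by blast
  have skew: "(B j)$i + (B i)$j = 0" for i j
  proof -
    have "du (sp (cm (axis i 1) (B i)) (cm (axis j 1) (B j))) = 0" using duP B by blast
    then show ?thesis by (simp add: sp_cm inner_axis inner_axis' inner_commute)
  qed
  have d0: "(B i)$i = 0" for i using skew[of i i] by simp
  define p where "p = (vector [(B 2)$3, (B 3)$1, (B 1)$2] :: real^3)"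
  have pB: "p \<times> axis i 1 = B i" for i
  proof -
    have s1: "(B 1)$2 = - (B 2)$1" "(B 1)$3 = - (B 3)$1" "(B 2)$3 = - (B 3)$2"
      using skew[of 1 2] skew[of 1 3] skew[of 2 3] by (simp_all add: algebra_simps)
    show ?thesis
      using exhaust_3[of i] d0[of 1] d0[of 2] d0[of 3] s1 skew[of 2 1] skew[of 3 1] skew[of 3 2]
      unfolding vec_eq_iff forall_3
      by (auto simp: p_def cross3_simps axis_def)
  qed
  have "cm a (p \<times> a) \<in> P" for a
  proof -
    have "cm a (p \<times> a) = cm (\<Sum>i\<in>UNIV. a$i *\<^sub>R axis i 1) (\<Sum>i\<in>UNIV. a$i *\<^sub>R (p \<times> axis i 1))"
      by (simp add: sum_axis cross_sum_axis)
    also have "\<dots> = (\<Sum>i\<in>UNIV. a$i *\<^sub>R cm (axis i 1) (B i))"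
      by (simp add: cm_sum cm_scale pB)
    also have "\<dots> \<in> P"
      using B by (intro subspace_sum[OF sP] subspace_scale[OF sP]) auto
    finally show ?thesis .
  qed
  then show ?thesis by blast
qed

lemma gen_mem:
  assumes P: "P \<in> Epts e sp" and g: "\<forall>a. cm a (p \<times> a) \<in> P" and u: "cm n m \<in> P"
  shows "m = p \<times> n"
  using mem_P[OF P u] g by blast

definition fq :: "real^3 \<Rightarrow> 'a^3" where "fq q = (\<chi> i. cm (axis i 1) (q \<times> axis i 1))"

lemma fq_ortho: "orthonormal (fq q)"
  unfolding orthonormal_def
  by (simp add: fq_def sp_cm inner_axis_axis triple_anti one_dual_def zero_dual_def)

lemma fq_sum: "(\<Sum>k\<in>UNIV. dscale e (Dual (a$k) (c$k)) (fq q $ k)) = cm a (q \<times> a + c)"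
proof -
  have "(\<Sum>k\<in>UNIV. dscale e (Dual (a$k) (c$k)) (fq q $ k))
     = (\<Sum>k\<in>UNIV. cm (a$k *\<^sub>R axis k 1) (a$k *\<^sub>R (q \<times> axis k 1) + c$k *\<^sub>R axis k 1))"
    by (simp add: fq_def dscale_cm)
  also have "\<dots> = cm (\<Sum>k\<in>UNIV. a$k *\<^sub>R axis k 1) (\<Sum>k\<in>UNIV. a$k *\<^sub>R (q \<times> axis k 1) + c$k *\<^sub>R axis k 1)"
    by (simp add: cm_sum)
  also have "\<dots> = cm a (q \<times> a + c)"
    by (simp add: sum.distrib sum_axis cross_sum_axis)
  finally show ?thesis .
qed

lemma fq_dbasis: "dbasis e (fq q)"
proof (rule ortho_dbasis[OF fq_ortho])
  fix x
  obtain a b where x: "x = cm a b" using cm_surj by blast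
  have "x = (\<Sum>k\<in>UNIV. dscale e ((\<chi> k. Dual (a$k) ((b - q \<times> a)$k))$k) (fq q $ k))"
    using fq_sum[of a "b - q \<times> a" q] by (simp add: x)
  then show "inD (fq q) x" unfolding inD_def by blast
qed

lemma fq_OR: "fq q \<in> OR"
proof (rule OR_shift[OF fOR _ fq_dbasis])
  show "\<forall>j. fq q $ j - f $ j \<in> range e"
    by (simp add: fq_def f_cm cm_diff[symmetric] cm_in_range)
qed

lemma Ediff_Pp:
  assumes B: "\<forall>i. cm (axis i 1) ((q + d) \<times> axis i 1) \<in> B"
  shows "Ediff e sp OR (Pp q) B (cm d 0)"
  unfolding Ediff_def
proof (intro exI conjI allI)
  fix i j
  show "fq q $ i \<in> Pp q" by (simp add: fq_def Pp_mem)
  show "re (sp (fq q $ i) (fq q $ j)) = (if i = j then 1 else 0)"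
    using fq_ortho[of q] by (simp add: orthonormal_def)
next
  show "fq q \<in> OR" by (rule fq_OR)
  have "(\<Sum>k\<in>UNIV. d$k *\<^sub>R fq q $ k) = (\<Sum>k\<in>UNIV. cm (d$k *\<^sub>R axis k 1) (d$k *\<^sub>R (q \<times> axis k 1)))"
    by (simp add: fq_def cm_scale)
  also have "\<dots> = cm d (q \<times> d)" by (simp add: cm_sum[symmetric] sum_axis cross_sum_axis)
  finally show "cm d 0 - (\<Sum>k\<in>UNIV. d$k *\<^sub>R fq q $ k) \<in> range e"
    by (simp add: cm_diff[symmetric] cm_in_range)
next
  fix i
  have "e (\<Sum>j\<in>UNIV. \<Sum>k\<in>UNIV. (levi i j k * d$k) *\<^sub>R fq q $ j)
      = (\<Sum>j\<in>UNIV. (\<Sum>k\<in>UNIV. levi i j k * d$k) *\<^sub>R cm 0 (axis j 1))"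
    by (simp add: fq_def scaleR_sum_left)
  also have "\<dots> = (\<Sum>j\<in>UNIV. cm 0 ((\<Sum>k\<in>UNIV. levi i j k * d$k) *\<^sub>R axis j 1))"
    by (metis (no_types) cm_scale scaleR_zero_right)
  also have "\<dots> = cm 0 (\<Sum>j\<in>UNIV. (\<Sum>k\<in>UNIV. levi i j k * d$k) *\<^sub>R axis j 1)"
    by (simp add: cm_sum[symmetric])
  also have "\<dots> = cm 0 (d \<times> axis i 1)" by (simp add: sum_axis levi_test)
  finally have "fq q $ i + e (\<Sum>j\<in>UNIV. \<Sum>k\<in>UNIV. (levi i j k * d$k) *\<^sub>R fq q $ j)
      = cm (axis i 1) ((q + d) \<times> axis i 1)"
    by (simp add: fq_def cm_add[symmetric] cross_add_left)
  then show "fq q $ i + e (\<Sum>j\<in>UNIV. \<Sum>k\<in>UNIV. (levi i j k * d$k) *\<^sub>R fq q $ j) \<in> B"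
    using B by simp
qed

end




definition hh :: "real^3 \<Rightarrow> real^3 \<Rightarrow> real" where "hh w v = (w \<bullet> v) / (w \<bullet> w)"
definition onax :: "real^3 \<Rightarrow> real^3 \<Rightarrow> real^3 \<Rightarrow> bool" where
  "onax w v p \<longleftrightarrow> p \<times> w = v - hh w v *\<^sub>R w"

lemma par_cross:
  fixes a b :: "real^3"
  assumes "a \<noteq> 0" "a \<times> b = 0"
  shows "b = ((a \<bullet> b) / (a \<bullet> a)) *\<^sub>R a"
proof -
  have "a \<times> (a \<times> b) = 0" using assms by simp
  then have "(a \<bullet> b) *\<^sub>R a = (a \<bullet> a) *\<^sub>R b" by (simp add: Lagrange)
  moreover have nz: "a \<bullet> a \<noteq> 0" using assms by simp
  ultimately have "b = (1 / (a \<bullet> a)) *\<^sub>R ((a \<bullet> b) *\<^sub>R a)" by simp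
  then show ?thesis by simp
qed

lemma onax_of_cross:
  fixes w v p :: "real^3"
  assumes w: "w \<noteq> 0" and c: "(v - p \<times> w) \<times> w = 0"
  shows "onax w v p"
proof -
  define r where "r = v - p \<times> w"
  have "w \<times> r = 0" using c r_def cross_skew[of r w] by simp
  then have r: "r = ((w \<bullet> r) / (w \<bullet> w)) *\<^sub>R w" using par_cross[OF w] by blast
  have "w \<bullet> r = w \<bullet> v" by (simp add: r_def inner_diff_right dot_cross_self)
  then have "r = hh w v *\<^sub>R w" using r by (simp add: hh_def)
  then show ?thesis by (simp add: onax_def r_def algebra_simps)
qed

lemma lemM:
  fixes w v q d :: "real^3"
  assumes w: "w \<noteq> 0" and d: "d \<noteq> 0" and dw: "d \<bullet> w = 0" and V: "(v - q \<times> w) \<bullet> d = 0"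
  shows "\<exists>t. onax w v (q + t *\<^sub>R d)"
proof -
  define V where "V = v - q \<times> w"
  define W where "W = V \<times> w"
  have "d \<times> W = (d \<bullet> w) *\<^sub>R V - (d \<bullet> V) *\<^sub>R w" by (simp add: W_def Lagrange)
  also have "\<dots> = 0" using dw V by (simp add: V_def inner_commute)
  finally have "d \<times> W = 0" .
  then have Wd: "W = ((d \<bullet> W) / (d \<bullet> d)) *\<^sub>R d" using par_cross[OF d] by blast
  define t where "t = - (d \<bullet> W) / ((d \<bullet> d) * (w \<bullet> w))"
  have ww: "w \<bullet> w \<noteq> 0" using w by simp
  have dwx: "(d \<times> w) \<times> w = - ((w \<bullet> w) *\<^sub>R d)"
    using dw cross_skew[of "d \<times> w" w] by (simp add: Lagrange inner_commute)
  have "(v - (q + t *\<^sub>R d) \<times> w) \<times> w = W - t *\<^sub>R ((d \<times> w) \<times> w)"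
    by (simp add: W_def V_def cross_add_left cross_mult_left Cross3.left_diff_distrib)
  also have "\<dots> = W + (t * (w \<bullet> w)) *\<^sub>R d" by (simp add: dwx)
  also have "\<dots> = 0" using ww by (subst Wd) (simp add: t_def field_simps)
  finally show ?thesis using onax_of_cross[OF w] by blast
qed

lemma KEY:
  fixes wx wy vx vy :: "real^3"
  assumes wx: "wx \<noteq> 0"
  shows "\<exists>q d. d \<noteq> 0 \<and> d \<bullet> wx = 0 \<and> d \<bullet> wy = 0 \<and> (vx - q \<times> wx) \<bullet> d = 0 \<and> (vy - q \<times> wy) \<bullet> d = 0"
proof (cases "wx \<times> wy = 0")
  case False
  define d where "d = wx \<times> wy"
  define q where "q = (1 / (d \<bullet> d)) *\<^sub>R ((vy \<bullet> d) *\<^sub>R wx - (vx \<bullet> d) *\<^sub>R wy)"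
  have dd: "d \<bullet> d \<noteq> 0" using False d_def by simp
  have t1: "(wx \<times> d) \<bullet> wy = - (d \<bullet> d)" "wy \<bullet> (wx \<times> d) = - (d \<bullet> d)" by (simp_all add: d_def cross3_simps)
  have t2: "(wy \<times> d) \<bullet> wx = d \<bullet> d" "wx \<bullet> (wy \<times> d) = d \<bullet> d" by (simp_all add: d_def cross3_simps)
  have t3: "(wx \<times> d) \<bullet> wx = 0" "(wy \<times> d) \<bullet> wy = 0" "wx \<bullet> (wx \<times> d) = 0" "wy \<bullet> (wy \<times> d) = 0"
    by (simp_all add: cross3_simps)
  have "(q \<times> wx) \<bullet> d = (wx \<times> d) \<bullet> q" by (rule cross_triple)
  also have "\<dots> = vx \<bullet> d" using dd
    by (simp add: q_def inner_add_right inner_diff_right t1 t3)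
  finally have 1: "(q \<times> wx) \<bullet> d = vx \<bullet> d" .
  have "(q \<times> wy) \<bullet> d = (wy \<times> d) \<bullet> q" by (rule cross_triple)
  also have "\<dots> = vy \<bullet> d" using dd
    by (simp add: q_def inner_add_right inner_diff_right t2 t3)
  finally have 2: "(q \<times> wy) \<bullet> d = vy \<bullet> d" .
  have "d \<noteq> 0" "d \<bullet> wx = 0" "d \<bullet> wy = 0"
    using False by (simp_all add: d_def dot_cross_self inner_commute)
  then show ?thesis using 1 2 by (intro exI[of _ q] exI[of _ d]) (simp add: inner_diff_left)
next
  case True
  define k where "k = (wx \<bullet> wy) / (wx \<bullet> wx)"
  have wy: "wy = k *\<^sub>R wx" using par_cross[OF wx True] k_def by simp
  define w where "w = vy - k *\<^sub>R vx"
  obtain d where d: "d \<noteq> 0" "d \<bullet> wx = 0" "d \<bullet> w = 0"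
  proof (cases "wx \<times> w = 0")
    case False
    then show ?thesis using that[of "wx \<times> w"] by (simp add: dot_cross_self inner_commute)
  next
    case True
    have ww: "w = ((wx \<bullet> w) / (wx \<bullet> wx)) *\<^sub>R wx" using par_cross[OF wx True] .
    obtain i where i: "wx \<times> axis i 1 \<noteq> 0" using cross_basis_nonzero[OF wx] by blast
    have "(wx \<times> axis i 1) \<bullet> wx = 0" by (simp add: dot_cross_self inner_commute)
    moreover have "(wx \<times> axis i 1) \<bullet> w = 0" by (subst ww) (simp add: dot_cross_self inner_commute)
    ultimately show ?thesis using that[of "wx \<times> axis i 1"] i by blast
  qed
  define q where "q = (1 / (wx \<bullet> wx)) *\<^sub>R (wx \<times> vx)"
  have xx: "wx \<bullet> wx \<noteq> 0" using wx by simp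
  have qx: "q \<times> wx = vx - ((wx \<bullet> vx) / (wx \<bullet> wx)) *\<^sub>R wx"
  proof -
    have "(wx \<times> vx) \<times> wx = (wx \<bullet> wx) *\<^sub>R vx - (wx \<bullet> vx) *\<^sub>R wx"
      using cross_skew[of "wx \<times> vx" wx] by (simp add: Lagrange)
    then have "q \<times> wx = (1 / (wx \<bullet> wx)) *\<^sub>R ((wx \<bullet> wx) *\<^sub>R vx - (wx \<bullet> vx) *\<^sub>R wx)"
      by (simp add: q_def cross_mult_left)
    also have "\<dots> = vx - ((wx \<bullet> vx) / (wx \<bullet> wx)) *\<^sub>R wx" using xx by (simp add: scaleR_diff_right)
    finally show ?thesis .
  qed
  have 1: "(vx - q \<times> wx) \<bullet> d = 0" using d by (simp add: qx inner_commute)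
  have "(vy - q \<times> wy) \<bullet> d = w \<bullet> d + k * ((vx - q \<times> wx) \<bullet> d)"
    by (simp add: wy w_def cross_mult_right inner_diff_left algebra_simps)
  then have 2: "(vy - q \<times> wy) \<bullet> d = 0" using 1 d by (simp add: inner_commute)
  have "d \<bullet> wy = 0" using d wy by simp
  then show ?thesis using d 1 2 by blast
qed

lemma PAIR:
  fixes wx wy vx vy :: "real^3"
  assumes wx: "wx \<noteq> 0"
  shows "\<exists>q d. d \<noteq> 0 \<and> (\<forall>a b. d \<bullet> (a *\<^sub>R wx + b *\<^sub>R wy) = 0 \<and>
            (a *\<^sub>R wx + b *\<^sub>R wy \<noteq> 0 \<longrightarrow> (\<exists>t. onax (a *\<^sub>R wx + b *\<^sub>R wy) (a *\<^sub>R vx + b *\<^sub>R vy) (q + t *\<^sub>R d))))"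
proof -
  obtain q d where d: "d \<noteq> 0" "d \<bullet> wx = 0" "d \<bullet> wy = 0" "(vx - q \<times> wx) \<bullet> d = 0" "(vy - q \<times> wy) \<bullet> d = 0"
    using KEY[OF wx] by blast
  have "\<forall>a b. d \<bullet> (a *\<^sub>R wx + b *\<^sub>R wy) = 0 \<and>
            (a *\<^sub>R wx + b *\<^sub>R wy \<noteq> 0 \<longrightarrow> (\<exists>t. onax (a *\<^sub>R wx + b *\<^sub>R wy) (a *\<^sub>R vx + b *\<^sub>R vy) (q + t *\<^sub>R d)))"
  proof (intro allI conjI impI)
    fix a b
    show dw: "d \<bullet> (a *\<^sub>R wx + b *\<^sub>R wy) = 0" using d by (simp add: inner_add_right)
    assume nz: "a *\<^sub>R wx + b *\<^sub>R wy \<noteq> 0"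
    have "(a *\<^sub>R vx + b *\<^sub>R vy - q \<times> (a *\<^sub>R wx + b *\<^sub>R wy)) \<bullet> d
        = a * ((vx - q \<times> wx) \<bullet> d) + b * ((vy - q \<times> wy) \<bullet> d)"
      by (simp add: cross_add_right cross_mult_right inner_diff_left inner_add_left algebra_simps)
    then have "(a *\<^sub>R vx + b *\<^sub>R vy - q \<times> (a *\<^sub>R wx + b *\<^sub>R wy)) \<bullet> d = 0" using d by simp
    then show "\<exists>t. onax (a *\<^sub>R wx + b *\<^sub>R wy) (a *\<^sub>R vx + b *\<^sub>R vy) (q + t *\<^sub>R d)"
      using lemM[OF nz d(1) dw] by blast
  qed
  then show ?thesis using d(1) by blast
qed


lemma GEO3:
  fixes w1 w2 w3 v1 v2 v3 :: "real^3"
  assumes n1: "w1 \<noteq> 0" and n2: "w2 \<noteq> 0" and n3: "w3 \<noteq> 0"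
    and w3: "w3 = a *\<^sub>R w1 + b *\<^sub>R w2" and v3: "v3 = a *\<^sub>R v1 + b *\<^sub>R v2"
  shows "\<exists>q d. d \<noteq> 0 \<and> d \<bullet> w1 = 0 \<and> d \<bullet> w2 = 0 \<and> d \<bullet> w3 = 0 \<and>
     (\<exists>t. onax w1 v1 (q + t *\<^sub>R d)) \<and> (\<exists>t. onax w2 v2 (q + t *\<^sub>R d)) \<and> (\<exists>t. onax w3 v3 (q + t *\<^sub>R d))"
proof -
  obtain q d where d: "d \<noteq> 0" and H: "\<forall>a b. d \<bullet> (a *\<^sub>R w1 + b *\<^sub>R w2) = 0 \<and>
            (a *\<^sub>R w1 + b *\<^sub>R w2 \<noteq> 0 \<longrightarrow> (\<exists>t. onax (a *\<^sub>R w1 + b *\<^sub>R w2) (a *\<^sub>R v1 + b *\<^sub>R v2) (q + t *\<^sub>R d)))"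
    using PAIR[OF n1, of w2 v1 v2] by blast
  have h1: "d \<bullet> w1 = 0 \<and> (\<exists>t. onax w1 v1 (q + t *\<^sub>R d))" using H[rule_format, of 1 0] n1 by simp
  have h2: "d \<bullet> w2 = 0 \<and> (\<exists>t. onax w2 v2 (q + t *\<^sub>R d))" using H[rule_format, of 0 1] n2 by simp
  have h3: "d \<bullet> w3 = 0 \<and> (\<exists>t. onax w3 v3 (q + t *\<^sub>R d))" using H[rule_format, of a b] n3 w3 v3 by simp
  show ?thesis using d h1 h2 h3 by blast
qed

lemma GEO:
  fixes w1 w2 w3 v1 v2 v3 :: "real^3"
  assumes n1: "w1 \<noteq> 0" and n2: "w2 \<noteq> 0" and n3: "w3 \<noteq> 0"
    and c: "c1 \<noteq> 0 \<or> c2 \<noteq> 0 \<or> c3 \<noteq> 0"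
    and sw: "c1 *\<^sub>R w1 + c2 *\<^sub>R w2 + c3 *\<^sub>R w3 = 0" and sv: "c1 *\<^sub>R v1 + c2 *\<^sub>R v2 + c3 *\<^sub>R v3 = 0"
  shows "\<exists>q d. d \<noteq> 0 \<and> d \<bullet> w1 = 0 \<and> d \<bullet> w2 = 0 \<and> d \<bullet> w3 = 0 \<and>
     (\<exists>t. onax w1 v1 (q + t *\<^sub>R d)) \<and> (\<exists>t. onax w2 v2 (q + t *\<^sub>R d)) \<and> (\<exists>t. onax w3 v3 (q + t *\<^sub>R d))"
proof -
  have solve: "z = (- x / c) *\<^sub>R p + (- y / c) *\<^sub>R r"
    if "c \<noteq> 0" "x *\<^sub>R p + y *\<^sub>R r + c *\<^sub>R z = 0" for c x y :: real and p r z :: "real^3"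
  proof -
    have "c *\<^sub>R z = - (x *\<^sub>R p + y *\<^sub>R r)" using that(2) by (simp add: add_eq_0_iff2 algebra_simps)
    then have "z = (1 / c) *\<^sub>R (- (x *\<^sub>R p + y *\<^sub>R r))" using that(1)
      by (metis divide_inverse_commute divide_self_if mult_1 scaleR_one scaleR_scaleR)
    then show ?thesis by (simp add: scaleR_add_right algebra_simps)
  qed
  consider "c3 \<noteq> 0" | "c2 \<noteq> 0" | "c1 \<noteq> 0" using c by blast
  then show ?thesis
  proof cases
    case 1
    show ?thesis
      by (rule GEO3[OF n1 n2 n3 solve[OF 1 sw] solve[OF 1 sv]])
  next
    case 2
    have sw': "c1 *\<^sub>R w1 + c3 *\<^sub>R w3 + c2 *\<^sub>R w2 = 0" using sw by (simp add: algebra_simps)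
    have sv': "c1 *\<^sub>R v1 + c3 *\<^sub>R v3 + c2 *\<^sub>R v2 = 0" using sv by (simp add: algebra_simps)
    show ?thesis using GEO3[OF n1 n3 n2 solve[OF 2 sw'] solve[OF 2 sv']] by blast
  next
    case 3
    have sw': "c2 *\<^sub>R w2 + c3 *\<^sub>R w3 + c1 *\<^sub>R w1 = 0" using sw by (simp add: algebra_simps)
    have sv': "c2 *\<^sub>R v2 + c3 *\<^sub>R v3 + c1 *\<^sub>R v1 = 0" using sv by (simp add: algebra_simps)
    show ?thesis using GEO3[OF n2 n3 n1 solve[OF 3 sw'] solve[OF 3 sv']] by blast
  qed
qed




definition nn :: "real^3 \<Rightarrow> real^3" where "nn w = (1 / norm w) *\<^sub>R w"
definition mm :: "real^3 \<Rightarrow> real^3 \<Rightarrow> real^3" where "mm w v = (1 / norm w) *\<^sub>R (v - hh w v *\<^sub>R w)"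

lemma nn_unit: "w \<noteq> 0 \<Longrightarrow> nn w \<bullet> nn w = 1"
  by (simp add: nn_def power2_norm_eq_inner[symmetric] field_simps)

lemma nn_mm: "w \<noteq> 0 \<Longrightarrow> nn w \<bullet> mm w v = 0"
  by (simp add: nn_def mm_def hh_def inner_diff_right)

lemma w_rep: "w \<noteq> 0 \<Longrightarrow> w = norm w *\<^sub>R nn w"
  by (simp add: nn_def)

lemma v_rep: "w \<noteq> 0 \<Longrightarrow> v = norm w *\<^sub>R mm w v + hh w v *\<^sub>R w"
  by (simp add: mm_def)

lemma nn_nz: "w \<noteq> 0 \<Longrightarrow> nn w \<noteq> 0"
  by (simp add: nn_def)

lemma onax_mm: "w \<noteq> 0 \<Longrightarrow> onax w v p \<longleftrightarrow> mm w v = p \<times> nn w"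
proof -
  assume w: "w \<noteq> 0"
  have "mm w v = p \<times> nn w \<longleftrightarrow> (1 / norm w) *\<^sub>R (v - hh w v *\<^sub>R w) = (1 / norm w) *\<^sub>R (p \<times> w)"
    by (simp add: mm_def nn_def cross_mult_right)
  also have "\<dots> \<longleftrightarrow> v - hh w v *\<^sub>R w = p \<times> w" using w by simp
  finally show ?thesis by (auto simp: onax_def)
qed

context frame
begin

lemma dec_cm:
  assumes w: "w \<noteq> 0"
  shows "dec e sp (cm w v) = (norm w, (w \<bullet> v) / norm w, cm (nn w) (mm w v))"
  unfolding dec_def
proof (rule the_equality)
  have nw: "norm w > 0" using w by simp
  have ww: "w \<bullet> w = (norm w)^2" by (simp add: power2_norm_eq_inner)
  have "dscale e (Dual (norm w) ((w \<bullet> v) / norm w)) (cm (nn w) (mm w v))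
      = cm (norm w *\<^sub>R nn w) (norm w *\<^sub>R mm w v + ((w \<bullet> v) / norm w) *\<^sub>R nn w)"
    by (simp add: dscale_cm)
  also have "\<dots> = cm w v"
  proof -
    have "((w \<bullet> v) / norm w) *\<^sub>R nn w = hh w v *\<^sub>R w"
      using nw by (simp add: nn_def hh_def ww power2_eq_square)
    then show ?thesis using w_rep[OF w] v_rep[OF w, of v] by simp
  qed
  finally have 1: "cm w v = dscale e (Dual (norm w) ((w \<bullet> v) / norm w)) (cm (nn w) (mm w v))" by simp
  have 2: "sp (cm (nn w) (mm w v)) (cm (nn w) (mm w v)) = 1"
    using nn_unit[OF w] nn_mm[OF w, of v] by (simp add: sp_cm one_dual_def inner_commute)
  show "case (norm w, (w \<bullet> v) / norm w, cm (nn w) (mm w v)) of (a, b, u) \<Rightarrow>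
      0 < a \<and> cm w v = dscale e (Dual a b) u \<and> sp u u = 1"
    using nw 1 2 by simp
next
  fix y
  assume hy: "case y of (a, b, u) \<Rightarrow> 0 < a \<and> cm w v = dscale e (Dual a b) u \<and> sp u u = 1"
  obtain a b u where y: "y = (a, b, u)" by (cases y) auto
  have a: "a > 0" and z: "cm w v = dscale e (Dual a b) u" and uu: "sp u u = 1" using hy y by auto
  obtain n m where u: "u = cm n m" using cm_surj by blast
  have "cm w v = cm (a *\<^sub>R n) (a *\<^sub>R m + b *\<^sub>R n)" using z u by (simp add: dscale_cm)
  then have wn: "w = a *\<^sub>R n" and vn: "v = a *\<^sub>R m + b *\<^sub>R n" by (simp_all add: cm_eq_iff)
  have "Dual (n \<bullet> n) (n \<bullet> m + m \<bullet> n) = 1" using uu u by (simp add: sp_cm)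
  then have n1: "n \<bullet> n = 1" and nm: "n \<bullet> m = 0" by (simp_all add: one_dual_def inner_commute)
  have normn: "norm n = 1" using n1 by (simp add: norm_eq_sqrt_inner)
  have na: "norm w = a" using wn a normn by simp
  have nnw: "nn w = n" using na a wn by (simp add: nn_def)
  have wv: "w \<bullet> v = a * b" using wn vn n1 nm by (simp add: inner_add_right algebra_simps)
  have bb: "b = (w \<bullet> v) / norm w" using wv na a by simp
  have hw: "hh w v *\<^sub>R w = b *\<^sub>R n"
    using wn wv a n1 by (simp add: hh_def power2_eq_square field_simps)
  have "v - hh w v *\<^sub>R w = a *\<^sub>R m" using hw vn by simp
  then have "mm w v = m" using na a by (simp add: mm_def)
  then show "y = (norm w, (w \<bullet> v) / norm w, cm (nn w) (mm w v))"
    using y na bb nnw u by simp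
qed

lemma pitch_cm: "w \<noteq> 0 \<Longrightarrow> pitch e sp (cm w v) = hh w v"
  by (simp add: pitch_def dec_cm hh_def power2_norm_eq_inner[symmetric] power2_eq_square)

lemma unitpart_cm: "w \<noteq> 0 \<Longrightarrow> unitpart e sp (cm w v) = cm (nn w) (mm w v)"
  by (simp add: unitpart_def dec_cm)


lemma cm_nonrange: assumes "z \<notin> range e" obtains w v where "z = cm w v" "w \<noteq> 0"
proof -
  obtain w v where z: "z = cm w v" using cm_surj by blast
  then have "w \<noteq> 0" using assms cm_in_range by blast
  then show ?thesis using that z by blast
qed

lemma axis_scale:
  assumes s: "s \<noteq> 0" and u: "unitpart e sp z' = s *\<^sub>R unitpart e sp z"
  shows "screw_axis e sp z' = screw_axis e sp z"
proof -
  have "s *\<^sub>R x \<in> P \<longleftrightarrow> x \<in> P" if "P \<in> Epts e sp" for P x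
  proof -
    have sP: "subspace P" using that by (simp add: Epts_def)
    show ?thesis
    proof
      assume "s *\<^sub>R x \<in> P"
      then have "(1 / s) *\<^sub>R (s *\<^sub>R x) \<in> P" using sP subspace_scale by blast
      then show "x \<in> P" using s by simp
    qed (use sP subspace_scale in blast)
  qed
  then show ?thesis unfolding screw_axis_def u by blast
qed

lemma cm_comb: "c1 *\<^sub>R cm w1 v1 + c2 *\<^sub>R cm w2 v2 = cm (c1 *\<^sub>R w1 + c2 *\<^sub>R w2) (c1 *\<^sub>R v1 + c2 *\<^sub>R v2)"
  by (simp add: cm_add cm_scale[symmetric])

lemma part1_fwd:
  assumes w1: "w1 \<noteq> 0" and w2: "w2 \<noteq> 0" and c: "c1 \<noteq> 0 \<or> c2 \<noteq> 0"
    and dep: "c1 *\<^sub>R cm w1 v1 + c2 *\<^sub>R cm w2 v2 = 0"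
  shows "screw_axis e sp (cm w1 v1) = screw_axis e sp (cm w2 v2) \<and> pitch e sp (cm w1 v1) = pitch e sp (cm w2 v2)"
proof -
  have "cm (c1 *\<^sub>R w1 + c2 *\<^sub>R w2) (c1 *\<^sub>R v1 + c2 *\<^sub>R v2) = cm 0 0" using dep by (simp add: cm_comb)
  then have sw: "c1 *\<^sub>R w1 + c2 *\<^sub>R w2 = 0" and sv: "c1 *\<^sub>R v1 + c2 *\<^sub>R v2 = 0"
    by (simp_all only: cm_eq_iff)
  have c2: "c2 \<noteq> 0"
  proof
    assume "c2 = 0"
    then have "c1 \<noteq> 0" "c1 *\<^sub>R w1 = 0" using c sw by auto
    then show False using w1 by simp
  qed
  define l where "l = - c1 / c2"
  have w2l: "w2 = l *\<^sub>R w1"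
  proof -
    have eq: "c2 *\<^sub>R w2 = - (c1 *\<^sub>R w1)" using sw by (simp add: eq_neg_iff_add_eq_0 add.commute)
    have "w2 = (1 / c2) *\<^sub>R (c2 *\<^sub>R w2)" using c2 by simp
    also have "\<dots> = (1 / c2) *\<^sub>R (- (c1 *\<^sub>R w1))" using eq by simp
    finally show ?thesis by (simp add: l_def)
  qed
  have v2l: "v2 = l *\<^sub>R v1"
  proof -
    have eq: "c2 *\<^sub>R v2 = - (c1 *\<^sub>R v1)" using sv by (simp add: eq_neg_iff_add_eq_0 add.commute)
    have "v2 = (1 / c2) *\<^sub>R (c2 *\<^sub>R v2)" using c2 by simp
    also have "\<dots> = (1 / c2) *\<^sub>R (- (c1 *\<^sub>R v1))" using eq by simp
    finally show ?thesis by (simp add: l_def)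
  qed
  have l0: "l \<noteq> 0" using w2 w2l by auto
  have p: "pitch e sp (cm w2 v2) = pitch e sp (cm w1 v1)"
    using w1 w2 l0 by (simp add: pitch_cm w2l v2l hh_def)
  define s where "s = l / \<bar>l\<bar>"
  have s0: "s \<noteq> 0" using l0 by (simp add: s_def)
  have "nn w2 = s *\<^sub>R nn w1" using l0 by (simp add: nn_def w2l s_def)
  moreover have "mm w2 v2 = s *\<^sub>R mm w1 v1"
  proof -
    have "hh w2 v2 = hh w1 v1" using l0 by (simp add: w2l v2l hh_def)
    then show ?thesis using l0 by (simp add: mm_def w2l v2l s_def scaleR_diff_right)
  qed
  ultimately have "unitpart e sp (cm w2 v2) = s *\<^sub>R unitpart e sp (cm w1 v1)"
    using w1 w2 by (simp add: unitpart_cm cm_scale)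
  then have "screw_axis e sp (cm w2 v2) = screw_axis e sp (cm w1 v1)" using axis_scale[OF s0] by blast
  then show ?thesis using p by simp
qed

lemma part1_bwd:
  assumes w1: "w1 \<noteq> 0" and w2: "w2 \<noteq> 0"
    and ax: "screw_axis e sp (cm w1 v1) = screw_axis e sp (cm w2 v2)"
    and pt: "pitch e sp (cm w1 v1) = pitch e sp (cm w2 v2)"
  shows "\<exists>c1 c2::real. (c1 \<noteq> 0 \<or> c2 \<noteq> 0) \<and> c1 *\<^sub>R cm w1 v1 + c2 *\<^sub>R cm w2 v2 = 0"
proof -
  define n1 where "n1 = nn w1"
  define m1 where "m1 = mm w1 v1"
  define n2 where "n2 = nn w2"
  define m2 where "m2 = mm w2 v2"
  have n11: "n1 \<bullet> n1 = 1" and n1m1: "n1 \<bullet> m1 = 0" using nn_unit[OF w1] nn_mm[OF w1] n1_def m1_def by auto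
  have gen: "m2 = p \<times> n2" if "m1 = p \<times> n1" for p
  proof -
    have "unitpart e sp (cm w1 v1) \<in> Pp p" using that w1 by (simp add: unitpart_cm Pp_mem n1_def m1_def)
    then have "Pp p \<in> screw_axis e sp (cm w1 v1)" using Pp_E by (simp add: screw_axis_def)
    then have "Pp p \<in> screw_axis e sp (cm w2 v2)" using ax by simp
    then have "unitpart e sp (cm w2 v2) \<in> Pp p" by (simp add: screw_axis_def)
    then have "cm n2 m2 \<in> Pp p" using w2 by (simp add: unitpart_cm n2_def m2_def)
    then obtain a where "cm n2 m2 = cm a (p \<times> a)" unfolding Pp_def by blast
    then show ?thesis by (simp add: cm_eq_iff)
  qed
  have p0: "m1 = (n1 \<times> m1) \<times> n1"
    using n11 n1m1 cross_skew[of "n1 \<times> m1" n1] by (simp add: Lagrange inner_commute)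
  have p1: "m1 = (n1 \<times> m1 + n1) \<times> n1" using p0 by (simp add: cross_add_left)
  have "(n1 \<times> m1) \<times> n2 = (n1 \<times> m1 + n1) \<times> n2" using gen[OF p0] gen[OF p1] by simp
  then have "n1 \<times> n2 = 0" by (simp add: cross_add_left)
  moreover have n1z: "n1 \<noteq> 0" using n11 by auto
  ultimately have n2s: "n2 = (n1 \<bullet> n2) *\<^sub>R n1" using par_cross[of n1 n2] n11 by simp
  define s where "s = n1 \<bullet> n2"
  have s0: "s \<noteq> 0" using n2s nn_nz[OF w2] n2_def s_def by force
  have m2s: "m2 = s *\<^sub>R m1"
  proof -
    have "m2 = (n1 \<times> m1) \<times> n2" using gen[OF p0] .
    also have "\<dots> = s *\<^sub>R ((n1 \<times> m1) \<times> n1)" by (subst n2s) (simp add: cross_mult_right s_def)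
    also have "\<dots> = s *\<^sub>R m1" using p0 by simp
    finally show ?thesis .
  qed
  define l where "l = norm w2 * s / norm w1"
  have l0: "l \<noteq> 0" using s0 w1 w2 by (simp add: l_def)
  have w2l: "w2 = l *\<^sub>R w1"
  proof -
    have "w2 = norm w2 *\<^sub>R n2" using w_rep[OF w2] n2_def by simp
    also have "\<dots> = (norm w2 * s) *\<^sub>R n1" by (subst n2s) (simp add: s_def)
    also have "\<dots> = l *\<^sub>R (norm w1 *\<^sub>R n1)" using w1 by (simp add: l_def)
    also have "norm w1 *\<^sub>R n1 = w1" using w_rep[OF w1] n1_def by simp
    finally show ?thesis .
  qed
  have hh: "hh w1 v1 = hh w2 v2" using pt w1 w2 by (simp add: pitch_cm)
  have v2l: "v2 = l *\<^sub>R v1"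
  proof -
    have "v2 = norm w2 *\<^sub>R m2 + hh w2 v2 *\<^sub>R w2" using v_rep[OF w2] m2_def by simp
    also have "\<dots> = (norm w2 * s) *\<^sub>R m1 + hh w1 v1 *\<^sub>R (l *\<^sub>R w1)" using m2s hh w2l by simp
    also have "\<dots> = l *\<^sub>R (norm w1 *\<^sub>R m1 + hh w1 v1 *\<^sub>R w1)"
      using w1 by (simp add: l_def scaleR_add_right)
    also have "norm w1 *\<^sub>R m1 + hh w1 v1 *\<^sub>R w1 = v1" using v_rep[OF w1] m1_def by simp
    finally show ?thesis .
  qed
  have "l *\<^sub>R cm w1 v1 + (-1) *\<^sub>R cm w2 v2 = 0"
    by (simp add: w2l v2l cm_scale)
  then show ?thesis by (intro exI[of _ l] exI[of _ "-1"]) simp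
qed

end



context frame
begin

lemma line_z:
  assumes w: "w \<noteq> 0" and d: "d \<noteq> 0" and dw: "d \<bullet> w = 0" and on: "onax w v (q + t *\<^sub>R d)"
  shows "screw_axis e sp (cm w v) \<inter> Eline e sp OR (Pp q) (cm d 0) \<noteq> {}
         \<and> re (sp (cm d 0) (unitpart e sp (cm w v))) = 0"
proof
  define B where "B = Pp (q + t *\<^sub>R d)"
  have BE: "B \<in> Epts e sp" unfolding B_def by (rule Pp_E)
  have "mm w v = (q + t *\<^sub>R d) \<times> nn w" using on onax_mm[OF w] by simp
  then have "unitpart e sp (cm w v) \<in> B" using w by (simp add: unitpart_cm B_def Pp_mem)
  then have 1: "B \<in> screw_axis e sp (cm w v)" using BE by (simp add: screw_axis_def)
  have "Ediff e sp OR (Pp q) B (cm (t *\<^sub>R d) 0)"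
    by (rule Ediff_Pp) (simp add: B_def Pp_mem)
  moreover have "cm (t *\<^sub>R d) 0 - t *\<^sub>R cm d 0 \<in> range e"
  proof -
    have "cm (t *\<^sub>R d) 0 - t *\<^sub>R cm d 0 = e 0" using cm_scale[of t d 0] by simp
    then show ?thesis by (metis rangeI)
  qed
  ultimately have 2: "B \<in> Eline e sp OR (Pp q) (cm d 0)" using BE unfolding Eline_def by blast
  show "screw_axis e sp (cm w v) \<inter> Eline e sp OR (Pp q) (cm d 0) \<noteq> {}" using 1 2 by blast
  show "re (sp (cm d 0) (unitpart e sp (cm w v))) = 0"
    using w dw by (simp add: unitpart_cm sp_cm nn_def)
qed

lemma plane_ok:
  assumes d: "d \<noteq> 0" and n0: "n0 \<noteq> 0" and dn: "d \<bullet> n0 = 0"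
  shows "is_Eplane e sp OR (Eplane e sp OR (Pp q) (cm d 0) (cm n0 0))"
proof -
  have indep: "\<forall>s t. s *\<^sub>R cm d 0 + t *\<^sub>R cm n0 0 \<in> range e \<longrightarrow> s = 0 \<and> t = 0"
  proof (intro allI impI)
    fix s t
    assume "s *\<^sub>R cm d 0 + t *\<^sub>R cm n0 0 \<in> range e"
    then have "cm (s *\<^sub>R d + t *\<^sub>R n0) 0 \<in> range e" using cm_comb[of s d 0 t n0 0] by simp
    then have z: "s *\<^sub>R d + t *\<^sub>R n0 = 0" by (simp add: cm_in_range)
    then have "d \<bullet> (s *\<^sub>R d + t *\<^sub>R n0) = 0" by simp
    then have "s * (d \<bullet> d) = 0" using dn by (simp add: inner_add_right)
    then have s0: "s = 0" using d by simp
    then have "t = 0" using z n0 by simp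
    then show "s = 0 \<and> t = 0" using s0 by simp
  qed
  show ?thesis unfolding is_Eplane_def using Pp_E indep by blast
qed

lemma plane_z:
  assumes w: "w \<noteq> 0" and on: "onax w v (q + t *\<^sub>R d)" and nc: "nn w = c *\<^sub>R n0"
  shows "screw_axis e sp (cm w v) \<subseteq> Eplane e sp OR (Pp q) (cm d 0) (cm n0 0)"
proof
  fix B assume "B \<in> screw_axis e sp (cm w v)"
  then have BE: "B \<in> Epts e sp" and uB: "cm (nn w) (mm w v) \<in> B"
    using w by (auto simp: screw_axis_def unitpart_cm)
  obtain p where g: "\<forall>a. cm a (p \<times> a) \<in> B" using E_gen[OF BE] by blast
  have m1: "mm w v = p \<times> nn w" using gen_mem[OF BE g uB] .
  have m2: "mm w v = (q + t *\<^sub>R d) \<times> nn w" using on onax_mm[OF w] by simp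
  define p' where "p' = q + t *\<^sub>R d"
  have "(p - p') \<times> nn w = 0" using m1 m2 by (simp add: p'_def Cross3.left_diff_distrib)
  then have "nn w \<times> (p - p') = 0" using cross_skew[of "nn w" "p - p'"] by simp
  then have pp: "p - p' = ((nn w \<bullet> (p - p')) / (nn w \<bullet> nn w)) *\<^sub>R nn w"
    using par_cross[OF nn_nz[OF w]] by blast
  define mu where "mu = ((nn w \<bullet> (p - p')) / (nn w \<bullet> nn w)) * c"
  have pq: "p - q - t *\<^sub>R d - mu *\<^sub>R n0 = 0"
  proof -
    have "p - p' = mu *\<^sub>R n0" using pp nc by (simp add: mu_def)
    then show ?thesis by (simp add: p'_def algebra_simps)
  qed
  have "Ediff e sp OR (Pp q) B (cm (p - q) 0)"
    by (rule Ediff_Pp) (use g in simp)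
  moreover have "cm (p - q) 0 - t *\<^sub>R cm d 0 - mu *\<^sub>R cm n0 0 \<in> range e"
  proof -
    have "cm (p - q) 0 - t *\<^sub>R cm d 0 - mu *\<^sub>R cm n0 0 = cm (p - q - t *\<^sub>R d - mu *\<^sub>R n0) 0"
      by (simp add: cm_diff[symmetric] cm_scale[symmetric])
    also have "\<dots> = e 0" using pq by simp
    finally show ?thesis by (metis rangeI)
  qed
  ultimately show "B \<in> Eplane e sp OR (Pp q) (cm d 0) (cm n0 0)"
    using BE unfolding Eplane_def by blast
qed


lemma par_unit:
  assumes w1: "w1 \<noteq> 0" and w2: "w2 \<noteq> 0"
    and h: "unitpart e sp (cm w2 v2) - k *\<^sub>R unitpart e sp (cm w1 v1) \<in> range e"
  shows "nn w2 = k *\<^sub>R nn w1"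
proof -
  have "unitpart e sp (cm w2 v2) - k *\<^sub>R unitpart e sp (cm w1 v1)
      = cm (nn w2 - k *\<^sub>R nn w1) (mm w2 v2 - k *\<^sub>R mm w1 v1)"
    using w1 w2 by (simp add: unitpart_cm cm_diff cm_scale)
  then have "nn w2 - k *\<^sub>R nn w1 = 0" using h cm_in_range by simp
  then show ?thesis by simp
qed

lemma main_frame:
  shows "(\<forall>z1 z2. z1 \<notin> range e \<longrightarrow> z2 \<notin> range e \<longrightarrow>
            ((\<exists>c1 c2::real. (c1 \<noteq> 0 \<or> c2 \<noteq> 0) \<and> c1 *\<^sub>R z1 + c2 *\<^sub>R z2 = 0)
             \<longleftrightarrow> (screw_axis e sp z1 = screw_axis e sp z2 \<and> pitch e sp z1 = pitch e sp z2)))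
       \<and> (\<forall>z1 z2 z3. z1 \<notin> range e \<longrightarrow> z2 \<notin> range e \<longrightarrow> z3 \<notin> range e \<longrightarrow>
            (\<exists>c1 c2 c3::real. (c1 \<noteq> 0 \<or> c2 \<noteq> 0 \<or> c3 \<noteq> 0) \<and> c1 *\<^sub>R z1 + c2 *\<^sub>R z2 + c3 *\<^sub>R z3 = 0)
            \<longrightarrow> (\<exists>A\<in>Epts e sp. \<exists>v. v \<notin> range e \<and>
                   (\<forall>z\<in>{z1, z2, z3}. screw_axis e sp z \<inter> Eline e sp OR A v \<noteq> {}
                                     \<and> re (sp v (unitpart e sp z)) = 0))
              \<and> ((\<forall>z\<in>{z1, z2, z3}. \<forall>z'\<in>{z1, z2, z3}.
                     \<exists>c::real. unitpart e sp z - c *\<^sub>R unitpart e sp z' \<in> range e)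
                 \<longrightarrow> (\<exists>S. is_Eplane e sp OR S \<and> (\<forall>z\<in>{z1, z2, z3}. screw_axis e sp z \<subseteq> S))))"
proof -
  have P1: "\<forall>z1 z2. z1 \<notin> range e \<longrightarrow> z2 \<notin> range e \<longrightarrow>
            ((\<exists>c1 c2::real. (c1 \<noteq> 0 \<or> c2 \<noteq> 0) \<and> c1 *\<^sub>R z1 + c2 *\<^sub>R z2 = 0)
             \<longleftrightarrow> (screw_axis e sp z1 = screw_axis e sp z2 \<and> pitch e sp z1 = pitch e sp z2))"
  proof (intro allI impI)
    fix z1 z2 assume n1: "z1 \<notin> range e" and n2: "z2 \<notin> range e"
    obtain w1 v1 where z1: "z1 = cm w1 v1" "w1 \<noteq> 0" using cm_nonrange[OF n1] by blast
    obtain w2 v2 where z2: "z2 = cm w2 v2" "w2 \<noteq> 0" using cm_nonrange[OF n2] by blast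
    show "(\<exists>c1 c2::real. (c1 \<noteq> 0 \<or> c2 \<noteq> 0) \<and> c1 *\<^sub>R z1 + c2 *\<^sub>R z2 = 0)
             \<longleftrightarrow> (screw_axis e sp z1 = screw_axis e sp z2 \<and> pitch e sp z1 = pitch e sp z2)"
      unfolding z1(1) z2(1)
    proof
      assume "\<exists>c1 c2::real. (c1 \<noteq> 0 \<or> c2 \<noteq> 0) \<and> c1 *\<^sub>R cm w1 v1 + c2 *\<^sub>R cm w2 v2 = 0"
      then obtain c1 c2 :: real where "c1 \<noteq> 0 \<or> c2 \<noteq> 0" "c1 *\<^sub>R cm w1 v1 + c2 *\<^sub>R cm w2 v2 = 0" by blast
      then show "screw_axis e sp (cm w1 v1) = screw_axis e sp (cm w2 v2) \<and> pitch e sp (cm w1 v1) = pitch e sp (cm w2 v2)"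
        by (rule part1_fwd[OF z1(2) z2(2)])
    next
      assume "screw_axis e sp (cm w1 v1) = screw_axis e sp (cm w2 v2) \<and> pitch e sp (cm w1 v1) = pitch e sp (cm w2 v2)"
      then show "\<exists>c1 c2::real. (c1 \<noteq> 0 \<or> c2 \<noteq> 0) \<and> c1 *\<^sub>R cm w1 v1 + c2 *\<^sub>R cm w2 v2 = 0"
        using part1_bwd[OF z1(2) z2(2)] by blast
    qed
  qed
  have P2: "\<forall>z1 z2 z3. z1 \<notin> range e \<longrightarrow> z2 \<notin> range e \<longrightarrow> z3 \<notin> range e \<longrightarrow>
            (\<exists>c1 c2 c3::real. (c1 \<noteq> 0 \<or> c2 \<noteq> 0 \<or> c3 \<noteq> 0) \<and> c1 *\<^sub>R z1 + c2 *\<^sub>R z2 + c3 *\<^sub>R z3 = 0)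
            \<longrightarrow> (\<exists>A\<in>Epts e sp. \<exists>v. v \<notin> range e \<and>
                   (\<forall>z\<in>{z1, z2, z3}. screw_axis e sp z \<inter> Eline e sp OR A v \<noteq> {}
                                     \<and> re (sp v (unitpart e sp z)) = 0))
              \<and> ((\<forall>z\<in>{z1, z2, z3}. \<forall>z'\<in>{z1, z2, z3}.
                     \<exists>c::real. unitpart e sp z - c *\<^sub>R unitpart e sp z' \<in> range e)
                 \<longrightarrow> (\<exists>S. is_Eplane e sp OR S \<and> (\<forall>z\<in>{z1, z2, z3}. screw_axis e sp z \<subseteq> S)))"
  proof (intro allI impI)
    fix z1 z2 z3 assume n1: "z1 \<notin> range e" and n2: "z2 \<notin> range e" and n3: "z3 \<notin> range e"
      and dep: "\<exists>c1 c2 c3::real. (c1 \<noteq> 0 \<or> c2 \<noteq> 0 \<or> c3 \<noteq> 0) \<and> c1 *\<^sub>R z1 + c2 *\<^sub>R z2 + c3 *\<^sub>R z3 = 0"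
    obtain w1 v1 where z1: "z1 = cm w1 v1" and w1: "w1 \<noteq> 0" using cm_nonrange[OF n1] by blast
    obtain w2 v2 where z2: "z2 = cm w2 v2" and w2: "w2 \<noteq> 0" using cm_nonrange[OF n2] by blast
    obtain w3 v3 where z3: "z3 = cm w3 v3" and w3: "w3 \<noteq> 0" using cm_nonrange[OF n3] by blast
    obtain c1 c2 c3 where c: "c1 \<noteq> 0 \<or> c2 \<noteq> 0 \<or> c3 \<noteq> 0"
      and cz: "c1 *\<^sub>R z1 + c2 *\<^sub>R z2 + c3 *\<^sub>R z3 = 0" using dep by blast
    have "cm (c1 *\<^sub>R w1 + c2 *\<^sub>R w2 + c3 *\<^sub>R w3) (c1 *\<^sub>R v1 + c2 *\<^sub>R v2 + c3 *\<^sub>R v3) = cm 0 0"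
      using cz by (simp add: z1 z2 z3 cm_add cm_scale[symmetric])
    then have sw: "c1 *\<^sub>R w1 + c2 *\<^sub>R w2 + c3 *\<^sub>R w3 = 0" and sv: "c1 *\<^sub>R v1 + c2 *\<^sub>R v2 + c3 *\<^sub>R v3 = 0"
      by (simp_all only: cm_eq_iff)
    obtain q d where d: "d \<noteq> 0" and dw: "d \<bullet> w1 = 0" "d \<bullet> w2 = 0" "d \<bullet> w3 = 0"
      and t1: "\<exists>t. onax w1 v1 (q + t *\<^sub>R d)" and t2: "\<exists>t. onax w2 v2 (q + t *\<^sub>R d)"
      and t3: "\<exists>t. onax w3 v3 (q + t *\<^sub>R d)"
      using GEO[OF w1 w2 w3 c sw sv] by blast
    obtain s1 where s1: "onax w1 v1 (q + s1 *\<^sub>R d)" using t1 by blast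
    obtain s2 where s2: "onax w2 v2 (q + s2 *\<^sub>R d)" using t2 by blast
    obtain s3 where s3: "onax w3 v3 (q + s3 *\<^sub>R d)" using t3 by blast
    have L: "\<forall>z\<in>{z1, z2, z3}. screw_axis e sp z \<inter> Eline e sp OR (Pp q) (cm d 0) \<noteq> {}
                                     \<and> re (sp (cm d 0) (unitpart e sp z)) = 0"
    proof
      fix z assume "z \<in> {z1, z2, z3}"
      then consider "z = z1" | "z = z2" | "z = z3" by blast
      then show "screw_axis e sp z \<inter> Eline e sp OR (Pp q) (cm d 0) \<noteq> {}
                                     \<and> re (sp (cm d 0) (unitpart e sp z)) = 0"
      proof cases
        case 1 then show ?thesis using line_z[OF w1 d dw(1) s1] z1 by simp
      next
        case 2 then show ?thesis using line_z[OF w2 d dw(2) s2] z2 by simp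
      next
        case 3 then show ?thesis using line_z[OF w3 d dw(3) s3] z3 by simp
      qed
    qed
    have nd: "cm d 0 \<notin> range e" using d by (simp add: cm_in_range)
    have PA: "\<exists>A\<in>Epts e sp. \<exists>v. v \<notin> range e \<and>
                   (\<forall>z\<in>{z1, z2, z3}. screw_axis e sp z \<inter> Eline e sp OR A v \<noteq> {}
                                     \<and> re (sp v (unitpart e sp z)) = 0)"
    proof (rule bexI[of _ "Pp q"])
      show "Pp q \<in> Epts e sp" by (rule Pp_E)
      show "\<exists>v. v \<notin> range e \<and>
                   (\<forall>z\<in>{z1, z2, z3}. screw_axis e sp z \<inter> Eline e sp OR (Pp q) v \<noteq> {}
                                     \<and> re (sp v (unitpart e sp z)) = 0)"
        by (intro exI[of _ "cm d 0"] conjI nd L)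
    qed
    have PB: "(\<forall>z\<in>{z1, z2, z3}. \<forall>z'\<in>{z1, z2, z3}.
                     \<exists>c::real. unitpart e sp z - c *\<^sub>R unitpart e sp z' \<in> range e)
                 \<longrightarrow> (\<exists>S. is_Eplane e sp OR S \<and> (\<forall>z\<in>{z1, z2, z3}. screw_axis e sp z \<subseteq> S))"
    proof
      assume H: "\<forall>z\<in>{z1, z2, z3}. \<forall>z'\<in>{z1, z2, z3}.
                     \<exists>c::real. unitpart e sp z - c *\<^sub>R unitpart e sp z' \<in> range e"
      obtain k2 where k2: "unitpart e sp z2 - k2 *\<^sub>R unitpart e sp z1 \<in> range e" using H by blast
      obtain k3 where k3: "unitpart e sp z3 - k3 *\<^sub>R unitpart e sp z1 \<in> range e" using H by blast
      define n0 where "n0 = nn w1"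
      have e1: "nn w1 = 1 *\<^sub>R n0" by (simp add: n0_def)
      have e2: "nn w2 = k2 *\<^sub>R n0" using par_unit[OF w1 w2] k2 by (simp add: n0_def z1 z2)
      have e3: "nn w3 = k3 *\<^sub>R n0" using par_unit[OF w1 w3] k3 by (simp add: n0_def z1 z3)
      have n0z: "n0 \<noteq> 0" using nn_nz[OF w1] by (simp add: n0_def)
      have dn: "d \<bullet> n0 = 0" using dw(1) by (simp add: n0_def nn_def)
      define S where "S = Eplane e sp OR (Pp q) (cm d 0) (cm n0 0)"
      have "is_Eplane e sp OR S" unfolding S_def by (rule plane_ok[OF d n0z dn])
      moreover have "\<forall>z\<in>{z1, z2, z3}. screw_axis e sp z \<subseteq> S"
      proof
        fix z assume "z \<in> {z1, z2, z3}"
        then consider "z = z1" | "z = z2" | "z = z3" by blast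
        then show "screw_axis e sp z \<subseteq> S"
        proof cases
          case 1 then show ?thesis using plane_z[OF w1 s1 e1] z1 by (simp add: S_def)
        next
          case 2 then show ?thesis using plane_z[OF w2 s2 e2] z2 by (simp add: S_def)
        next
          case 3 then show ?thesis using plane_z[OF w3 s3 e3] z3 by (simp add: S_def)
        qed
      qed
      ultimately show "\<exists>S. is_Eplane e sp OR S \<and> (\<forall>z\<in>{z1, z2, z3}. screw_axis e sp z \<subseteq> S)"
        by (intro exI[of _ S] conjI)
    qed
    show "(\<exists>A\<in>Epts e sp. \<exists>v. v \<notin> range e \<and>
                   (\<forall>z\<in>{z1, z2, z3}. screw_axis e sp z \<inter> Eline e sp OR A v \<noteq> {}
                                     \<and> re (sp v (unitpart e sp z)) = 0))
              \<and> ((\<forall>z\<in>{z1, z2, z3}. \<forall>z'\<in>{z1, z2, z3}.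
                     \<exists>c::real. unitpart e sp z - c *\<^sub>R unitpart e sp z' \<in> range e)
                 \<longrightarrow> (\<exists>S. is_Eplane e sp OR S \<and> (\<forall>z\<in>{z1, z2, z3}. screw_axis e sp z \<subseteq> S)))"
      using PA PB by (rule conjI)
  qed
  show ?thesis using P1 P2 by (rule conjI)
qed

end

context dm
begin

lemma main_dm:
  shows "(\<forall>z1 z2. z1 \<notin> range e \<longrightarrow> z2 \<notin> range e \<longrightarrow>
            ((\<exists>c1 c2::real. (c1 \<noteq> 0 \<or> c2 \<noteq> 0) \<and> c1 *\<^sub>R z1 + c2 *\<^sub>R z2 = 0)
             \<longleftrightarrow> (screw_axis e sp z1 = screw_axis e sp z2 \<and> pitch e sp z1 = pitch e sp z2)))
       \<and> (\<forall>z1 z2 z3. z1 \<notin> range e \<longrightarrow> z2 \<notin> range e \<longrightarrow> z3 \<notin> range e \<longrightarrow>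
            (\<exists>c1 c2 c3::real. (c1 \<noteq> 0 \<or> c2 \<noteq> 0 \<or> c3 \<noteq> 0) \<and> c1 *\<^sub>R z1 + c2 *\<^sub>R z2 + c3 *\<^sub>R z3 = 0)
            \<longrightarrow> (\<exists>A\<in>Epts e sp. \<exists>v. v \<notin> range e \<and>
                   (\<forall>z\<in>{z1, z2, z3}. screw_axis e sp z \<inter> Eline e sp OR A v \<noteq> {}
                                     \<and> re (sp v (unitpart e sp z)) = 0))
              \<and> ((\<forall>z\<in>{z1, z2, z3}. \<forall>z'\<in>{z1, z2, z3}.
                     \<exists>c::real. unitpart e sp z - c *\<^sub>R unitpart e sp z' \<in> range e)
                 \<longrightarrow> (\<exists>S. is_Eplane e sp OR S \<and> (\<forall>z\<in>{z1, z2, z3}. screw_axis e sp z \<subseteq> S))))"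
proof -
  obtain f where fo: "orthonormal f" and fb: "dbasis e f" and fOR: "f \<in> OR" using frame_exists by blast
  interpret F: frame e sp OR f
    by (rule frame.intro[OF dm_axioms]) (unfold_locales, fact fo, fact fb, fact fOR)
  show ?thesis by (rule F.main_frame)
qed

end

theorem proposition16:
  fixes e :: "'m::real_vector \<Rightarrow> 'm" and sp :: "'m \<Rightarrow> 'm \<Rightarrow> dual" and OR :: "('m^3) set"
  assumes "dmodule3 e sp OR"
  shows "(\<forall>z1 z2. z1 \<notin> range e \<longrightarrow> z2 \<notin> range e \<longrightarrow>
            ((\<exists>c1 c2::real. (c1 \<noteq> 0 \<or> c2 \<noteq> 0) \<and> c1 *\<^sub>R z1 + c2 *\<^sub>R z2 = 0)
             \<longleftrightarrow> (screw_axis e sp z1 = screw_axis e sp z2 \<and> pitch e sp z1 = pitch e sp z2)))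
       \<and> (\<forall>z1 z2 z3. z1 \<notin> range e \<longrightarrow> z2 \<notin> range e \<longrightarrow> z3 \<notin> range e \<longrightarrow>
            (\<exists>c1 c2 c3::real. (c1 \<noteq> 0 \<or> c2 \<noteq> 0 \<or> c3 \<noteq> 0) \<and> c1 *\<^sub>R z1 + c2 *\<^sub>R z2 + c3 *\<^sub>R z3 = 0)
            \<longrightarrow> (\<exists>A\<in>Epts e sp. \<exists>v. v \<notin> range e \<and>
                   (\<forall>z\<in>{z1, z2, z3}. screw_axis e sp z \<inter> Eline e sp OR A v \<noteq> {}
                                     \<and> re (sp v (unitpart e sp z)) = 0))
              \<and> ((\<forall>z\<in>{z1, z2, z3}. \<forall>z'\<in>{z1, z2, z3}.
                     \<exists>c::real. unitpart e sp z - c *\<^sub>R unitpart e sp z' \<in> range e)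
                 \<longrightarrow> (\<exists>S. is_Eplane e sp OR S \<and> (\<forall>z\<in>{z1, z2, z3}. screw_axis e sp z \<subseteq> S))))"
proof -
  interpret dm e sp OR by (rule dm.intro) (rule assms)
  show ?thesis by (rule main_dm)
qed

end
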